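(* Let $\omega$ be a primitive third root of unity, $S=\mathbb{C}\langle x,y,z\rangle/(x^2,y^2,z^2)$, and for $t\in\mathbb{C}^*$ let $T_t$ be the quotient of $S$ by the two-sided ideal generated by $(zxy+\omega xyz+\omega^2 yzx)+t(yxz+\omega zyx+\omega^2 xzy)$ and $(zxy+\omega^2 xyz+\omega yzx)+t(yxz+\omega^2 zyx+\omega xzy)$; let $M_t=T_t/(g_t)$ with $g_t=(zxy+xyz+yzx)+t(yxz+zyx+xzy)$. If $-t$ is a primitive $n$th root of unity, then the center of $M_t$ is generated (as an algebra) by $(x+y)^{2n}$, $(x+z)^{2n}$ and $(y+z)^{2n}$.
   Context: Grading: $\deg x=\deg y=\deg z=1$. *)

theory Defs
  imports Complex_Main
begin

text \<open>The free algebra C<x,y,z>: elements are coefficient functions on words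
  over the alphabet {X,Y,Z}; noncommutative polynomials are those with finite support.\<close>

datatype letter = X | Y | Z

type_synonym nc = "letter list \<Rightarrow> complex"

definition nc_poly :: "nc set" where
  "nc_poly = {f. finite {w. f w \<noteq> 0}}"

definition nc_zero :: nc where "nc_zero = (\<lambda>_. 0)"
definition nc_add :: "nc \<Rightarrow> nc \<Rightarrow> nc" where "nc_add f g = (\<lambda>w. f w + g w)"
definition nc_diff :: "nc \<Rightarrow> nc \<Rightarrow> nc" where "nc_diff f g = (\<lambda>w. f w - g w)"
definition nc_smult :: "complex \<Rightarrow> nc \<Rightarrow> nc" where "nc_smult c f = (\<lambda>w. c * f w)"
definition nc_mul :: "nc \<Rightarrow> nc \<Rightarrow> nc" where
  "nc_mul f g = (\<lambda>w. \<Sum>i\<le>length w. f (take i w) * g (drop i w))"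
definition nc_mono :: "letter list \<Rightarrow> nc" where
  "nc_mono u = (\<lambda>w. if w = u then 1 else 0)"
definition nc_one :: nc where "nc_one = nc_mono []"
definition nc_var :: "letter \<Rightarrow> nc" where "nc_var a = nc_mono [a]"

fun nc_pow :: "nc \<Rightarrow> nat \<Rightarrow> nc" where
  "nc_pow f 0 = nc_one"
| "nc_pow f (Suc k) = nc_mul f (nc_pow f k)"

inductive_set nc_ideal :: "nc set \<Rightarrow> nc set" for G :: "nc set" where
  zero: "nc_zero \<in> nc_ideal G"
| add: "a \<in> nc_ideal G \<Longrightarrow> b \<in> nc_ideal G \<Longrightarrow> nc_add a b \<in> nc_ideal G"
| smult: "a \<in> nc_ideal G \<Longrightarrow> nc_smult c a \<in> nc_ideal G"
| gen: "g \<in> G \<Longrightarrow> nc_mul (nc_mul (nc_mono u) g) (nc_mono v) \<in> nc_ideal G"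

inductive_set nc_subalg :: "nc set \<Rightarrow> nc set" for G :: "nc set" where
  one: "nc_one \<in> nc_subalg G"
| gen: "g \<in> G \<Longrightarrow> g \<in> nc_subalg G"
| add: "a \<in> nc_subalg G \<Longrightarrow> b \<in> nc_subalg G \<Longrightarrow> nc_add a b \<in> nc_subalg G"
| smult: "a \<in> nc_subalg G \<Longrightarrow> nc_smult c a \<in> nc_subalg G"
| mul: "a \<in> nc_subalg G \<Longrightarrow> b \<in> nc_subalg G \<Longrightarrow> nc_mul a b \<in> nc_subalg G"

definition x :: nc where "x = nc_var X"
definition y :: nc where "y = nc_var Y"
definition z :: nc where "z = nc_var Z"

definition mon3 :: "complex \<Rightarrow> letter \<Rightarrow> letter \<Rightarrow> letter \<Rightarrow> nc" where
  "mon3 c a b d = nc_smult c (nc_mono [a, b, d])"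

definition nc_sum :: "nc list \<Rightarrow> nc" where
  "nc_sum fs = foldr nc_add fs nc_zero"

definition rel :: "complex \<Rightarrow> complex \<Rightarrow> complex \<Rightarrow> nc" where
  "rel a b t = nc_sum [mon3 1 Z X Y, mon3 a X Y Z, mon3 b Y Z X,
                      mon3 t Y X Z, mon3 (t * a) Z Y X, mon3 (t * b) X Z Y]"

definition gT :: "complex \<Rightarrow> nc" where "gT t = rel 1 1 t"

definition I_M :: "complex \<Rightarrow> complex \<Rightarrow> nc set" where
  "I_M \<omega> t = nc_ideal {nc_mul x x, nc_mul y y, nc_mul z z,
                        rel \<omega> (\<omega>^2) t, rel (\<omega>^2) \<omega> t, gT t}"

text \<open>Preimage in C<x,y,z> of the center of the quotient C<x,y,z>/I.\<close>
definition central_mod :: "nc set \<Rightarrow> nc \<Rightarrow> bool" where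
  "central_mod I f \<longleftrightarrow> (\<forall>b\<in>nc_poly. nc_diff (nc_mul f b) (nc_mul b f) \<in> I)"

end

theory Submission
  imports Defs "HOL-Library.Multiset"
begin

lemma take_eq_iff_aux: "i \<le> length w \<Longrightarrow> (take i w = u) \<longleftrightarrow> (i = length u \<and> take (length u) w = u)"
  by (metis length_take min.absorb2)

lemma nc_mul_mono_left:
  "nc_mul (nc_mono u) g = (\<lambda>w. if take (length u) w = u then g (drop (length u) w) else 0)"
proof
  fix w :: "letter list"
  have "nc_mul (nc_mono u) g w = (\<Sum>i\<le>length w. if i = length u then (if take (length u) w = u then g (drop (length u) w) else 0) else 0)"
    unfolding nc_mul_def nc_mono_def
  proof (rule sum.cong[OF refl])
    fix i assume "i \<in> {..length w}"
    then have "take i w = u \<longleftrightarrow> (i = length u \<and> take (length u) w = u)"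
      by (intro take_eq_iff_aux) auto
    then show "(if take i w = u then 1 else 0) * g (drop i w) =
      (if i = length u then if take (length u) w = u then g (drop (length u) w) else 0 else 0)"
      by auto
  qed
  also have "\<dots> = (if take (length u) w = u then g (drop (length u) w) else 0)"
  proof (cases "length u \<le> length w")
    case True then show ?thesis by (simp add: sum.delta')
  next
    case False
    then have "take (length u) w \<noteq> u" by (metis length_take min.absorb2 nat_le_linear take_all)
    with False show ?thesis by (simp add: sum.delta')
  qed
  finally show "nc_mul (nc_mono u) g w = (if take (length u) w = u then g (drop (length u) w) else 0)" .
qed

lemma drop_eq_iff_aux: "i \<le> length w \<Longrightarrow> (drop i w = v) \<longleftrightarrow> (i = length w - length v \<and> length v \<le> length w \<and> drop (length w - length v) w = v)"
  by auto

lemma nc_mul_mono_right: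
  "nc_mul g (nc_mono v) = (\<lambda>w. if length v \<le> length w \<and> drop (length w - length v) w = v then g (take (length w - length v) w) else 0)"
proof
  fix w :: "letter list"
  have "nc_mul g (nc_mono v) w = (\<Sum>i\<le>length w. if i = length w - length v then (if length v \<le> length w \<and> drop (length w - length v) w = v then g (take (length w - length v) w) else 0) else 0)"
    unfolding nc_mul_def nc_mono_def
  proof (rule sum.cong[OF refl])
    fix i assume "i \<in> {..length w}"
    then have "drop i w = v \<longleftrightarrow> (i = length w - length v \<and> length v \<le> length w \<and> drop (length w - length v) w = v)"
      by (intro drop_eq_iff_aux) auto
    then show "g (take i w) * (if drop i w = v then 1 else 0) =
      (if i = length w - length v then if length v \<le> length w \<and> drop (length w - length v) w = v then g (take (length w - length v) w) else 0 else 0)"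
      by auto
  qed
  also have "\<dots> = (if length v \<le> length w \<and> drop (length w - length v) w = v then g (take (length w - length v) w) else 0)"
    by (simp add: sum.delta')
  finally show "nc_mul g (nc_mono v) w = (if length v \<le> length w \<and> drop (length w - length v) w = v then g (take (length w - length v) w) else 0)" .
qed

lemma mono_mul_mono: "nc_mul (nc_mono u) (nc_mono v) = nc_mono (u @ v)"
  unfolding nc_mul_mono_left
  by (rule ext) (auto simp: nc_mono_def, metis append_take_drop_id)

lemma nc_mul_assoc: "nc_mul (nc_mul f g) h = nc_mul f (nc_mul g h)"
proof
  fix w :: "letter list"
  let ?n = "length w"
  have "nc_mul (nc_mul f g) h w = (\<Sum>i\<le>?n. \<Sum>j\<le>i. f (take j w) * g (take (i - j) (drop j w)) * h (drop i w))"
    unfolding nc_mul_def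
    by (auto simp: sum_distrib_right min_def take_drop intro!: sum.cong)
  also have "\<dots> = (\<Sum>i\<in>{..?n}. \<Sum>j\<in>{j\<in>{..?n}. j \<le> i}. f (take j w) * g (take (i - j) (drop j w)) * h (drop i w))"
    by (intro sum.cong) auto
  also have "\<dots> = (\<Sum>j\<in>{..?n}. \<Sum>i\<in>{i\<in>{..?n}. j \<le> i}. f (take j w) * g (take (i - j) (drop j w)) * h (drop i w))"
    by (rule sum.swap_restrict) auto
  also have "\<dots> = (\<Sum>j\<le>?n. \<Sum>k\<le>?n - j. f (take j w) * g (take k (drop j w)) * h (drop (k + j) w))"
  proof (rule sum.cong[OF refl])
    fix j assume j: "j \<in> {..?n}"
    show "(\<Sum>i\<in>{i\<in>{..?n}. j \<le> i}. f (take j w) * g (take (i - j) (drop j w)) * h (drop i w)) =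
          (\<Sum>k\<le>?n - j. f (take j w) * g (take k (drop j w)) * h (drop (k + j) w))"
      by (rule sum.reindex_bij_witness[of _ "\<lambda>k. j + k" "\<lambda>i. i - j"]) (use j in auto)
  qed
  also have "\<dots> = nc_mul f (nc_mul g h) w"
    unfolding nc_mul_def
    by (auto simp: sum_distrib_left mult.assoc intro!: sum.cong)
  finally show "nc_mul (nc_mul f g) h w = nc_mul f (nc_mul g h) w" .
qed


definition supp :: "nc \<Rightarrow> letter list set" where "supp f = {w. f w \<noteq> 0}"

lemma poly_iff: "f \<in> nc_poly \<longleftrightarrow> finite (supp f)"
  by (simp add: nc_poly_def supp_def)

lemma mul_add_left: "nc_mul (nc_add f g) h = nc_add (nc_mul f h) (nc_mul g h)"
  by (rule ext) (simp add: nc_mul_def nc_add_def sum.distrib distrib_right)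
lemma mul_add_right: "nc_mul h (nc_add f g) = nc_add (nc_mul h f) (nc_mul h g)"
  by (rule ext) (simp add: nc_mul_def nc_add_def sum.distrib distrib_left)
lemma mul_smult_left: "nc_mul (nc_smult c f) h = nc_smult c (nc_mul f h)"
  by (rule ext) (simp add: nc_mul_def nc_smult_def sum_distrib_left mult.assoc)
lemma mul_smult_right: "nc_mul h (nc_smult c f) = nc_smult c (nc_mul h f)"
  by (rule ext) (simp add: nc_mul_def nc_smult_def sum_distrib_left mult.assoc mult.left_commute)
lemma mul_zero_left: "nc_mul nc_zero h = nc_zero"
  by (rule ext) (simp add: nc_mul_def nc_zero_def)
lemma mul_zero_right: "nc_mul h nc_zero = nc_zero"
  by (rule ext) (simp add: nc_mul_def nc_zero_def)
lemma mul_diff_left: "nc_mul (nc_diff f g) h = nc_diff (nc_mul f h) (nc_mul g h)"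
  by (rule ext) (simp add: nc_mul_def nc_diff_def sum_subtractf left_diff_distrib)
lemma mul_diff_right: "nc_mul h (nc_diff f g) = nc_diff (nc_mul h f) (nc_mul h g)"
  by (rule ext) (simp add: nc_mul_def nc_diff_def sum_subtractf right_diff_distrib)
lemma mul_one_left: "nc_mul nc_one f = f"
  by (simp add: nc_one_def nc_mul_mono_left)
lemma mul_one_right: "nc_mul f nc_one = f"
  by (simp add: nc_one_def nc_mul_mono_right)

definition nsum :: "('i \<Rightarrow> nc) \<Rightarrow> 'i set \<Rightarrow> nc" where
  "nsum F A = (\<lambda>w. \<Sum>i\<in>A. F i w)"

lemma nsum_empty: "nsum F {} = nc_zero"
  by (simp add: nsum_def nc_zero_def)
lemma nsum_insert: "finite A \<Longrightarrow> a \<notin> A \<Longrightarrow> nsum F (insert a A) = nc_add (F a) (nsum F A)"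
  by (rule ext) (simp add: nsum_def nc_add_def)
lemma mul_nsum_left: "nc_mul (nsum F A) h = nsum (\<lambda>i. nc_mul (F i) h) A"
  by (rule ext) (simp add: nsum_def nc_mul_def sum_distrib_right sum.swap[of _ A])
lemma mul_nsum_right: "nc_mul h (nsum F A) = nsum (\<lambda>i. nc_mul h (F i)) A"
  by (rule ext) (simp add: nsum_def nc_mul_def sum_distrib_left sum.swap[of _ A])
lemma nsum_cong: "(\<And>i. i \<in> A \<Longrightarrow> F i = F' i) \<Longrightarrow> nsum F A = nsum F' A"
  by (simp add: nsum_def)

lemma poly_expand: "f \<in> nc_poly \<Longrightarrow> f = nsum (\<lambda>u. nc_smult (f u) (nc_mono u)) (supp f)"
proof (rule ext)
  fix w assume "f \<in> nc_poly"
  then have fin: "finite (supp f)" by (simp add: poly_iff)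
  show "f w = nsum (\<lambda>u. nc_smult (f u) (nc_mono u)) (supp f) w"
    unfolding nsum_def nc_smult_def nc_mono_def
    using fin by (simp add: supp_def if_distrib cong: if_cong)
qed

lemma poly_add: "f \<in> nc_poly \<Longrightarrow> g \<in> nc_poly \<Longrightarrow> nc_add f g \<in> nc_poly"
  unfolding poly_iff
  by (rule finite_subset[of _ "supp f \<union> supp g"]) (auto simp: supp_def nc_add_def)
lemma poly_smult: "f \<in> nc_poly \<Longrightarrow> nc_smult c f \<in> nc_poly"
  unfolding poly_iff
  by (rule finite_subset[of _ "supp f"]) (auto simp: supp_def nc_smult_def)
lemma poly_diff: "f \<in> nc_poly \<Longrightarrow> g \<in> nc_poly \<Longrightarrow> nc_diff f g \<in> nc_poly"
  unfolding poly_iff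
  by (rule finite_subset[of _ "supp f \<union> supp g"]) (auto simp: supp_def nc_diff_def)
lemma poly_zero: "nc_zero \<in> nc_poly"
  by (simp add: poly_iff supp_def nc_zero_def)
lemma poly_mono: "nc_mono u \<in> nc_poly"
  unfolding poly_iff
  by (rule finite_subset[of _ "{u}"]) (auto simp: supp_def nc_mono_def)
lemma poly_one: "nc_one \<in> nc_poly"
  by (simp add: nc_one_def poly_mono)
lemma poly_mul: "f \<in> nc_poly \<Longrightarrow> g \<in> nc_poly \<Longrightarrow> nc_mul f g \<in> nc_poly"
  unfolding poly_iff
proof (rule finite_subset[of _ "(\<lambda>(u,v). u @ v) ` (supp f \<times> supp g)"])
  show "supp (nc_mul f g) \<subseteq> (\<lambda>(u, v). u @ v) ` (supp f \<times> supp g)"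
  proof
    fix w assume "w \<in> supp (nc_mul f g)"
    then have "(\<Sum>i\<le>length w. f (take i w) * g (drop i w)) \<noteq> 0" by (simp add: supp_def nc_mul_def)
    then obtain i where "f (take i w) * g (drop i w) \<noteq> 0" by (meson sum.neutral)
    then show "w \<in> (\<lambda>(u, v). u @ v) ` (supp f \<times> supp g)"
      by (intro image_eqI[of _ _ "(take i w, drop i w)"]) (auto simp: supp_def)
  qed
qed auto
lemma poly_nsum: "finite A \<Longrightarrow> (\<And>i. i \<in> A \<Longrightarrow> F i \<in> nc_poly) \<Longrightarrow> nsum F A \<in> nc_poly"
  by (induction A rule: finite_induct) (auto simp: nsum_empty nsum_insert poly_zero poly_add)
lemma poly_pow: "f \<in> nc_poly \<Longrightarrow> nc_pow f k \<in> nc_poly"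
  by (induction k) (auto simp: poly_one poly_mul)

lemma ideal_poly: assumes "G \<subseteq> nc_poly" shows "a \<in> nc_ideal G \<Longrightarrow> a \<in> nc_poly"
  by (induction rule: nc_ideal.induct) (use assms in \<open>auto simp: poly_zero poly_add poly_smult poly_mul poly_mono\<close>)

lemma ideal_diff: "a \<in> nc_ideal G \<Longrightarrow> b \<in> nc_ideal G \<Longrightarrow> nc_diff a b \<in> nc_ideal G"
proof -
  assume "a \<in> nc_ideal G" "b \<in> nc_ideal G"
  then have "nc_add a (nc_smult (-1) b) \<in> nc_ideal G" by (intro nc_ideal.add nc_ideal.smult)
  moreover have "nc_add a (nc_smult (-1) b) = nc_diff a b"
    by (rule ext) (simp add: nc_add_def nc_smult_def nc_diff_def)
  ultimately show ?thesis by simp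
qed

lemma ideal_nsum: "finite A \<Longrightarrow> (\<And>i. i \<in> A \<Longrightarrow> F i \<in> nc_ideal G) \<Longrightarrow> nsum F A \<in> nc_ideal G"
  by (induction A rule: finite_induct) (auto simp: nsum_empty nsum_insert intro: nc_ideal.intros)

lemma ideal_mono_left: "a \<in> nc_ideal G \<Longrightarrow> nc_mul (nc_mono u) a \<in> nc_ideal G"
proof (induction rule: nc_ideal.induct)
  case zero then show ?case by (simp add: mul_zero_right nc_ideal.zero)
next
  case (add a b) then show ?case by (simp add: mul_add_right nc_ideal.add)
next
  case (smult a c) then show ?case by (simp add: mul_smult_right nc_ideal.smult)
next
  case (gen g u' v)
  have "nc_mul (nc_mono u) (nc_mul (nc_mul (nc_mono u') g) (nc_mono v)) =
        nc_mul (nc_mul (nc_mono (u @ u')) g) (nc_mono v)"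
    by (simp add: nc_mul_assoc[symmetric] mono_mul_mono)
  with gen show ?case by (simp add: nc_ideal.gen)
qed

lemma ideal_mono_right: "a \<in> nc_ideal G \<Longrightarrow> nc_mul a (nc_mono v) \<in> nc_ideal G"
proof (induction rule: nc_ideal.induct)
  case zero then show ?case by (simp add: mul_zero_left nc_ideal.zero)
next
  case (add a b) then show ?case by (simp add: mul_add_left nc_ideal.add)
next
  case (smult a c) then show ?case by (simp add: mul_smult_left nc_ideal.smult)
next
  case (gen g u v')
  have "nc_mul (nc_mul (nc_mul (nc_mono u) g) (nc_mono v')) (nc_mono v) =
        nc_mul (nc_mul (nc_mono u) g) (nc_mono (v' @ v))"
    by (simp add: nc_mul_assoc mono_mul_mono)
  with gen show ?case by (simp add: nc_ideal.gen)
qed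

lemma ideal_mul_left: "p \<in> nc_poly \<Longrightarrow> a \<in> nc_ideal G \<Longrightarrow> nc_mul p a \<in> nc_ideal G"
proof -
  assume p: "p \<in> nc_poly" and a: "a \<in> nc_ideal G"
  have "nc_mul p a = nsum (\<lambda>u. nc_mul (nc_smult (p u) (nc_mono u)) a) (supp p)"
    by (subst poly_expand[OF p]) (simp add: mul_nsum_left)
  also have "\<dots> \<in> nc_ideal G"
    using p a by (intro ideal_nsum) (auto simp: poly_iff mul_smult_left intro: nc_ideal.smult ideal_mono_left)
  finally show ?thesis .
qed

lemma ideal_mul_right: "p \<in> nc_poly \<Longrightarrow> a \<in> nc_ideal G \<Longrightarrow> nc_mul a p \<in> nc_ideal G"
proof -
  assume p: "p \<in> nc_poly" and a: "a \<in> nc_ideal G"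
  have "nc_mul a p = nsum (\<lambda>u. nc_mul a (nc_smult (p u) (nc_mono u))) (supp p)"
    by (subst poly_expand[OF p]) (simp add: mul_nsum_right)
  also have "\<dots> \<in> nc_ideal G"
    using p a by (intro ideal_nsum) (auto simp: poly_iff mul_smult_right intro: nc_ideal.smult ideal_mono_right)
  finally show ?thesis .
qed

definition lin :: "(letter list \<Rightarrow> complex) \<Rightarrow> nc \<Rightarrow> complex" where
  "lin \<phi> f = (\<Sum>w\<in>supp f. f w * \<phi> w)"

lemma lin_superset: "finite A \<Longrightarrow> supp f \<subseteq> A \<Longrightarrow> lin \<phi> f = (\<Sum>w\<in>A. f w * \<phi> w)"
  unfolding lin_def by (rule sum.mono_neutral_left) (auto simp: supp_def)

lemma lin_add: "f \<in> nc_poly \<Longrightarrow> g \<in> nc_poly \<Longrightarrow> lin \<phi> (nc_add f g) = lin \<phi> f + lin \<phi> g"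
proof -
  assume f: "f \<in> nc_poly" and g: "g \<in> nc_poly"
  let ?A = "supp f \<union> supp g"
  have fin: "finite ?A" using f g by (simp add: poly_iff)
  have "lin \<phi> (nc_add f g) = (\<Sum>w\<in>?A. nc_add f g w * \<phi> w)"
    by (rule lin_superset[OF fin]) (auto simp: supp_def nc_add_def)
  also have "\<dots> = (\<Sum>w\<in>?A. f w * \<phi> w) + (\<Sum>w\<in>?A. g w * \<phi> w)"
    by (simp add: nc_add_def distrib_right sum.distrib)
  also have "\<dots> = lin \<phi> f + lin \<phi> g"
  proof -
    have "lin \<phi> f = (\<Sum>w\<in>?A. f w * \<phi> w)" by (rule lin_superset[OF fin]) auto
    moreover have "lin \<phi> g = (\<Sum>w\<in>?A. g w * \<phi> w)" by (rule lin_superset[OF fin]) auto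
    ultimately show ?thesis by simp
  qed
  finally show ?thesis .
qed

lemma lin_smult: "lin \<phi> (nc_smult c f) = c * lin \<phi> f"
proof (cases "c = 0")
  case True then show ?thesis by (simp add: lin_def nc_smult_def supp_def)
next
  case False
  then have "supp (nc_smult c f) = supp f" by (auto simp: supp_def nc_smult_def)
  then show ?thesis by (simp add: lin_def nc_smult_def sum_distrib_left mult.assoc)
qed

lemma lin_zero: "lin \<phi> nc_zero = 0"
  by (simp add: lin_def supp_def nc_zero_def)

lemma lin_diff: "f \<in> nc_poly \<Longrightarrow> g \<in> nc_poly \<Longrightarrow> lin \<phi> (nc_diff f g) = lin \<phi> f - lin \<phi> g"
proof -
  assume f: "f \<in> nc_poly" and g: "g \<in> nc_poly"
  have "nc_diff f g = nc_add f (nc_smult (-1) g)"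
    by (rule ext) (simp add: nc_add_def nc_smult_def nc_diff_def)
  then show ?thesis using f g by (simp add: lin_add poly_smult lin_smult)
qed

lemma lin_mono: "lin \<phi> (nc_mono u) = \<phi> u"
proof -
  have "lin \<phi> (nc_mono u) = (\<Sum>w\<in>{u}. nc_mono u w * \<phi> w)"
    by (rule lin_superset) (auto simp: supp_def nc_mono_def)
  then show ?thesis by (simp add: nc_mono_def)
qed

lemma lin_nsum: "finite A \<Longrightarrow> (\<And>i. i \<in> A \<Longrightarrow> F i \<in> nc_poly) \<Longrightarrow> lin \<phi> (nsum F A) = (\<Sum>i\<in>A. lin \<phi> (F i))"
  by (induction A rule: finite_induct) (auto simp: nsum_empty nsum_insert lin_zero lin_add poly_nsum)

lemma mono_g_mono: "g \<in> nc_poly \<Longrightarrow>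
  nc_mul (nc_mul (nc_mono u) g) (nc_mono v) = nsum (\<lambda>w. nc_smult (g w) (nc_mono (u @ w @ v))) (supp g)"
proof -
  assume g: "g \<in> nc_poly"
  have "nc_mul (nc_mul (nc_mono u) g) (nc_mono v) =
    nc_mul (nc_mul (nc_mono u) (nsum (\<lambda>w. nc_smult (g w) (nc_mono w)) (supp g))) (nc_mono v)"
    using poly_expand[OF g] by simp
  also have "\<dots> = nsum (\<lambda>w. nc_smult (g w) (nc_mono (u @ w @ v))) (supp g)"
    by (simp add: mul_nsum_left mul_nsum_right mul_smult_left mul_smult_right mono_mul_mono)
  finally show ?thesis .
qed

lemma lin_mono_g_mono: "g \<in> nc_poly \<Longrightarrow>
  lin \<phi> (nc_mul (nc_mul (nc_mono u) g) (nc_mono v)) = lin (\<lambda>w. \<phi> (u @ w @ v)) g"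
proof -
  assume g: "g \<in> nc_poly"
  then have "finite (supp g)" by (simp add: poly_iff)
  then have "lin \<phi> (nc_mul (nc_mul (nc_mono u) g) (nc_mono v)) = (\<Sum>w\<in>supp g. lin \<phi> (nc_smult (g w) (nc_mono (u@w@v))))"
    by (simp add: mono_g_mono[OF g] lin_nsum poly_smult poly_mono)
  also have "\<dots> = (\<Sum>w\<in>supp g. g w * \<phi> (u@w@v))" by (simp add: lin_smult lin_mono)
  also have "\<dots> = lin (\<lambda>w. \<phi> (u @ w @ v)) g" by (simp add: lin_def)
  finally show ?thesis .
qed

lemma lin_ideal:
  assumes G: "G \<subseteq> nc_poly" and H: "\<And>g u v. g \<in> G \<Longrightarrow> lin (\<lambda>w. \<phi> (u @ w @ v)) g = 0"
  shows "a \<in> nc_ideal G \<Longrightarrow> lin \<phi> a = 0"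
proof (induction rule: nc_ideal.induct)
  case zero then show ?case by (simp add: lin_zero)
next
  case (add a b) then show ?case using ideal_poly[OF G] by (simp add: lin_add)
next
  case (smult a c) then show ?case by (simp add: lin_smult)
next
  case (gen g u v) then show ?case using G H by (auto simp: lin_mono_g_mono)
qed


fun nxt :: "letter \<Rightarrow> letter" where "nxt X = Y" | "nxt Y = Z" | "nxt Z = X"
fun prv :: "letter \<Rightarrow> letter" where "prv X = Z" | "prv Y = X" | "prv Z = Y"

lemma nxt_prv[simp]: "nxt (prv a) = a" and prv_nxt[simp]: "prv (nxt a) = a"
  by (cases a; simp)+
lemma nxt_neq[simp]: "nxt a \<noteq> a" "prv a \<noteq> a" "a \<noteq> nxt a" "a \<noteq> prv a"
  by (cases a; simp)+
lemma nxt_nxt: "nxt (nxt a) = prv a" and prv_prv: "prv (prv a) = nxt a"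
  by (cases a; simp)+
lemma nxt_prv_neq[simp]: "nxt a \<noteq> prv a" "prv a \<noteq> nxt a"
  by (cases a; simp)+
lemma letter_cases3: "b = a \<or> b = nxt a \<or> b = prv a"
  by (cases a; cases b; simp)

locale cset =
  fixes \<omega> t :: complex and n :: nat
  assumes w3: "\<omega> ^ 3 = 1" and w1: "\<omega> \<noteq> 1" and t0: "t \<noteq> 0"
    and n0: "n > 0" and tn: "(- t) ^ n = 1" and prim: "\<forall>k. 0 < k \<and> k < n \<longrightarrow> (- t) ^ k \<noteq> 1"
begin

abbreviation "I \<equiv> I_M \<omega> t"
definition q :: complex where "q = - t"

lemma q0: "q \<noteq> 0" using t0 by (simp add: q_def)
lemma qn: "q ^ n = 1" using tn by (simp add: q_def)

lemma w2: "\<omega>^2 + \<omega> + 1 = 0"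
proof -
  have "(\<omega> - 1) * (\<omega>^2 + \<omega> + 1) = \<omega>^3 - 1" by (simp add: algebra_simps power2_eq_square power3_eq_cube)
  then have "(\<omega> - 1) * (\<omega>^2 + \<omega> + 1) = 0" using w3 by simp
  then show ?thesis using w1 by simp
qed

definition bin :: "letter \<Rightarrow> nc" where
  "bin a = nc_diff (nc_mono [a, nxt a, nxt (nxt a)]) (nc_smult q (nc_mono [nxt (nxt a), nxt a, a]))"

lemma rel_poly: "rel a b c \<in> nc_poly"
  unfolding rel_def nc_sum_def mon3_def
  by (simp add: poly_add poly_smult poly_zero poly_mono)

lemma gens_poly: "{nc_mul x x, nc_mul y y, nc_mul z z, rel \<omega> (\<omega>^2) t, rel (\<omega>^2) \<omega> t, gT t} \<subseteq> nc_poly"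
  by (simp add: x_def y_def z_def nc_var_def mono_mul_mono poly_mono rel_poly gT_def)

lemma I_poly: "a \<in> I \<Longrightarrow> a \<in> nc_poly"
  unfolding I_M_def using ideal_poly[OF gens_poly] by blast

lemma in_I_gen: "g \<in> {nc_mul x x, nc_mul y y, nc_mul z z, rel \<omega> (\<omega>^2) t, rel (\<omega>^2) \<omega> t, gT t} \<Longrightarrow> g \<in> I"
proof -
  assume g: "g \<in> {nc_mul x x, nc_mul y y, nc_mul z z, rel \<omega> (\<omega>^2) t, rel (\<omega>^2) \<omega> t, gT t}"
  have "nc_mul (nc_mul (nc_mono []) g) (nc_mono []) \<in> I"
    unfolding I_M_def by (rule nc_ideal.gen[OF g])
  then show ?thesis by (simp add: nc_one_def[symmetric] mul_one_left mul_one_right)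
qed

lemma rels_I: "rel \<omega> (\<omega>^2) t \<in> I" "rel (\<omega>^2) \<omega> t \<in> I" "gT t \<in> I"
  by (rule in_I_gen; simp)+

lemma sq_I: "nc_mono [a, a] \<in> I"
proof -
  have "nc_mono [a,a] \<in> {nc_mul x x, nc_mul y y, nc_mul z z}"
    by (cases a) (auto simp: x_def y_def z_def nc_var_def mono_mul_mono)
  then show ?thesis by (intro in_I_gen) auto
qed

lemma I_add: "a \<in> I \<Longrightarrow> b \<in> I \<Longrightarrow> nc_add a b \<in> I" unfolding I_M_def by (rule nc_ideal.add)
lemma I_smult: "a \<in> I \<Longrightarrow> nc_smult c a \<in> I" unfolding I_M_def by (rule nc_ideal.smult)
lemma I_zero: "nc_zero \<in> I" unfolding I_M_def by (rule nc_ideal.zero)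
lemma I_diff: "a \<in> I \<Longrightarrow> b \<in> I \<Longrightarrow> nc_diff a b \<in> I" unfolding I_M_def by (rule ideal_diff)
lemma I_mul_left: "p \<in> nc_poly \<Longrightarrow> a \<in> I \<Longrightarrow> nc_mul p a \<in> I" unfolding I_M_def by (rule ideal_mul_left)
lemma I_mul_right: "p \<in> nc_poly \<Longrightarrow> a \<in> I \<Longrightarrow> nc_mul a p \<in> I" unfolding I_M_def by (rule ideal_mul_right)
lemma I_nsum: "finite A \<Longrightarrow> (\<And>i. i \<in> A \<Longrightarrow> F i \<in> I) \<Longrightarrow> nsum F A \<in> I" unfolding I_M_def by (rule ideal_nsum)

lemma w2t: "t + (\<omega> * t + t * \<omega>\<^sup>2) = 0"
proof -
  have "t * (\<omega>^2 + \<omega> + 1) = 0" using w2 by simp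
  then show ?thesis by (simp add: algebra_simps)
qed

lemma rel_pt: "rel a b t w = (if w = [Z,X,Y] then 1 else if w = [X,Y,Z] then a else if w = [Y,Z,X] then b
   else if w = [Y,X,Z] then t else if w = [Z,Y,X] then t * a else if w = [X,Z,Y] then t * b else 0)"
  by (simp add: rel_def nc_sum_def mon3_def nc_add_def nc_smult_def nc_mono_def nc_zero_def)

lemma bin_pt: "bin a w = (if w = [a, nxt a, nxt (nxt a)] then 1 else if w = [nxt (nxt a), nxt a, a] then - q else 0)"
  by (cases a) (auto simp: bin_def nc_diff_def nc_smult_def nc_mono_def)

lemma sc0: "t * \<omega>\<^sup>2 + t * \<omega> + t = 0" using w2 w3 by algebra
lemma sc1: "t * \<omega> + t * \<omega>\<^sup>2 + t = 0" using w2 w3 by algebra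
lemma sc2: "\<omega> + \<omega>\<^sup>2 + 1 = 0" using w2 w3 by algebra
lemma sc3: "\<omega>\<^sup>2 * (t * \<omega>\<^sup>2) + \<omega> * (t * \<omega>) + t = 0" using w2 w3 by algebra
lemma sc4: "\<omega> * \<omega>\<^sup>2 = 1" using w2 w3 by algebra
lemma sc5: "\<omega>\<^sup>2 * t + \<omega> * t + t = 0" using w2 w3 by algebra
lemma sc6: "\<omega> ^ 4 + \<omega> * \<omega> + 1 = 0" using w2 w3 by algebra
lemma sc7: "\<omega> * (t * \<omega>) + \<omega>\<^sup>2 * (t * \<omega>\<^sup>2) + t = 0" using w2 w3 by algebra
lemma sc8: "\<omega> * t + \<omega>\<^sup>2 * t + t = 0" using w2 w3 by algebra
lemma sc9: "\<omega> * \<omega> + \<omega> ^ 4 + 1 = 0" using w2 w3 by algebra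

lemma bin_Z: "nc_smult 3 (bin Z) = nc_add (nc_add (rel \<omega> (\<omega>^2) t) (rel (\<omega>^2) \<omega> t)) (gT t)"
  apply (rule ext)
  apply (simp add: rel_pt bin_pt gT_def nc_add_def nc_smult_def q_def)
  using w2 sc0 sc1 sc2 sc3 sc4 sc5 sc6 sc7 sc8 sc9 by auto

lemma bin_X: "nc_smult 3 (bin X) = nc_add (nc_add (nc_smult (\<omega>^2) (rel \<omega> (\<omega>^2) t)) (nc_smult \<omega> (rel (\<omega>^2) \<omega> t))) (gT t)"
  apply (rule ext)
  apply (simp add: rel_pt bin_pt gT_def nc_add_def nc_smult_def q_def)
  using w2 sc0 sc1 sc2 sc3 sc4 sc5 sc6 sc7 sc8 sc9 by auto

lemma bin_Y: "nc_smult 3 (bin Y) = nc_add (nc_add (nc_smult \<omega> (rel \<omega> (\<omega>^2) t)) (nc_smult (\<omega>^2) (rel (\<omega>^2) \<omega> t))) (gT t)"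
  apply (rule ext)
  apply (simp add: rel_pt bin_pt gT_def nc_add_def nc_smult_def q_def)
  using w2 sc0 sc1 sc2 sc3 sc4 sc5 sc6 sc7 sc8 sc9 by auto

lemma bin_I: "bin a \<in> I"
proof -
  have I3: "nc_smult 3 (bin a) \<in> I"
    by (cases a) (simp_all only: bin_X bin_Y bin_Z; intro I_add I_smult rels_I)+
  have "bin a = nc_smult (1/3) (nc_smult 3 (bin a))" by (simp add: nc_smult_def fun_eq_iff)
  then show ?thesis using I3 I_smult by metis
qed

definition weq :: "letter list \<Rightarrow> complex \<Rightarrow> letter list \<Rightarrow> bool" where
  "weq u c v \<longleftrightarrow> nc_diff (nc_mono u) (nc_smult c (nc_mono v)) \<in> I"
definition zer :: "letter list \<Rightarrow> bool" where
  "zer u \<longleftrightarrow> nc_mono u \<in> I"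

lemma ctx_expand: "nc_mul (nc_mul (nc_mono p) (nc_diff (nc_mono u) (nc_smult c (nc_mono v)))) (nc_mono s)
   = nc_diff (nc_mono (p @ u @ s)) (nc_smult c (nc_mono (p @ v @ s)))"
  by (simp add: mul_diff_left mul_diff_right mul_smult_left mul_smult_right mono_mul_mono)

lemma I_ctx: "a \<in> I \<Longrightarrow> nc_mul (nc_mul (nc_mono p) a) (nc_mono s) \<in> I"
  by (intro I_mul_left I_mul_right poly_mono)

lemma weq_ctx: "weq u c v \<Longrightarrow> weq (p @ u @ s) c (p @ v @ s)"
  unfolding weq_def using I_ctx ctx_expand by metis

lemma zer_ctx: "zer u \<Longrightarrow> zer (p @ u @ s)"
  unfolding zer_def using I_ctx[of "nc_mono u" p s] by (simp add: mono_mul_mono)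

lemma weq_ctx_left: "weq u c v \<Longrightarrow> weq (p @ u) c (p @ v)"
  using weq_ctx[of u c v p "[]"] by simp
lemma weq_ctx_right: "weq u c v \<Longrightarrow> weq (u @ s) c (v @ s)"
  using weq_ctx[of u c v "[]" s] by simp
lemma weq_cons: "weq u c v \<Longrightarrow> weq (a # u) c (a # v)"
  using weq_ctx_left[of u c v "[a]"] by simp
lemma zer_left: "zer u \<Longrightarrow> zer (p @ u)" using zer_ctx[of u p "[]"] by simp
lemma zer_right: "zer u \<Longrightarrow> zer (u @ s)" using zer_ctx[of u "[]" s] by simp

lemma weq_refl: "weq u 1 u"
proof -
  have "nc_diff (nc_mono u) (nc_smult 1 (nc_mono u)) = nc_zero" by (simp add: fun_eq_iff nc_diff_def nc_smult_def nc_zero_def)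
  then show ?thesis by (simp add: weq_def I_zero)
qed

lemma weq_trans: "weq u c v \<Longrightarrow> weq v d w \<Longrightarrow> weq u (c * d) w"
proof -
  assume a: "weq u c v" and b: "weq v d w"
  have "nc_diff (nc_mono u) (nc_smult (c * d) (nc_mono w)) =
    nc_add (nc_diff (nc_mono u) (nc_smult c (nc_mono v))) (nc_smult c (nc_diff (nc_mono v) (nc_smult d (nc_mono w))))"
    by (simp add: fun_eq_iff nc_diff_def nc_smult_def nc_add_def algebra_simps)
  then show ?thesis using a b unfolding weq_def by (metis I_add I_smult)
qed

lemma weq_sym: "c \<noteq> 0 \<Longrightarrow> weq u c v \<Longrightarrow> weq v (1 / c) u"
proof -
  assume c: "c \<noteq> 0" and a: "weq u c v"
  have "nc_diff (nc_mono v) (nc_smult (1 / c) (nc_mono u)) = nc_smult (- 1 / c) (nc_diff (nc_mono u) (nc_smult c (nc_mono v)))"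
    using c by (simp add: fun_eq_iff nc_diff_def nc_smult_def field_simps)
  then show ?thesis using a unfolding weq_def by (metis I_smult)
qed

lemma weq_zer: "weq u c v \<Longrightarrow> zer v \<Longrightarrow> zer u"
proof -
  assume a: "weq u c v" and b: "zer v"
  have "nc_mono u = nc_add (nc_diff (nc_mono u) (nc_smult c (nc_mono v))) (nc_smult c (nc_mono v))"
    by (simp add: fun_eq_iff nc_diff_def nc_smult_def nc_add_def)
  then show ?thesis using a b unfolding weq_def zer_def by (metis I_add I_smult)
qed

lemma zer_weq: "zer u \<Longrightarrow> weq u 0 v"
proof -
  assume "zer u"
  moreover have "nc_diff (nc_mono u) (nc_smult 0 (nc_mono v)) = nc_mono u"
    by (simp add: fun_eq_iff nc_diff_def nc_smult_def)
  ultimately show ?thesis by (simp add: weq_def zer_def)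
qed

lemma weq0_zer: "weq u 0 v \<Longrightarrow> zer u"
proof -
  have "nc_diff (nc_mono u) (nc_smult 0 (nc_mono v)) = nc_mono u"
    by (simp add: fun_eq_iff nc_diff_def nc_smult_def)
  then show "weq u 0 v \<Longrightarrow> zer u" by (simp add: weq_def zer_def)
qed

lemma zer_sq: "zer [a, a]" by (simp add: zer_def sq_I)

lemma weq_basic: "weq [a, nxt a, nxt (nxt a)] q [nxt (nxt a), nxt a, a]"
  using bin_I by (simp add: weq_def bin_def)

definition kap :: "letter \<Rightarrow> letter \<Rightarrow> complex" where
  "kap a b = (if b = nxt a then q else 1 / q)"

lemma kap0: "kap a b \<noteq> 0" using q0 by (simp add: kap_def)

lemma weq_rel: "a \<noteq> b \<Longrightarrow> c \<noteq> a \<Longrightarrow> c \<noteq> b \<Longrightarrow> weq [a, b, c] (kap a b) [c, b, a]"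
proof -
  assume d: "a \<noteq> b" "c \<noteq> a" "c \<noteq> b"
  show ?thesis
  proof (cases "b = nxt a")
    case True
    then have "c = nxt (nxt a)" using d by (cases a; cases c; simp)
    then show ?thesis using True weq_basic[of a] by (simp add: kap_def)
  next
    case False
    then have b: "b = prv a" using d letter_cases3[of a b] by auto
    then have c: "c = nxt a" using d by (cases a; cases c; simp)
    have "weq [c, nxt c, nxt (nxt c)] q [nxt (nxt c), nxt c, c]" by (rule weq_basic)
    then have "weq [c, b, a] q [a, b, c]" using b c by (simp add: nxt_nxt)
    then have "weq [a, b, c] (1 / q) [c, b, a]" using weq_sym q0 by blast
    then show ?thesis using False by (simp add: kap_def)
  qed
qed

end

fun odds :: "letter list \<Rightarrow> letter list" and evens :: "letter list \<Rightarrow> letter list" where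
  "odds [] = []" | "odds (a # w) = a # evens w"
| "evens [] = []" | "evens (a # w) = odds w"

lemma odds_evens_append:
  "odds (u @ v) = odds u @ (if even (length u) then odds v else evens v) \<and>
   evens (u @ v) = evens u @ (if even (length u) then evens v else odds v)"
  by (induction u) auto

lemma odds_append: "odds (u @ v) = odds u @ (if even (length u) then odds v else evens v)"
  using odds_evens_append by blast
lemma evens_append: "evens (u @ v) = evens u @ (if even (length u) then evens v else odds v)"
  using odds_evens_append by blast

lemma length_odds_evens: "length (odds w) = length (evens w) \<or> length (odds w) = Suc (length (evens w))"
  by (induction w) auto

definition lab :: "letter list \<Rightarrow> letter multiset \<times> letter multiset" where
  "lab w = (mset (odds w), mset (evens w))"

fun invl :: "letter list \<Rightarrow> nat" where
  "invl [] = 0" | "invl (a # s) = count (mset s) (prv a) + invl s"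

definition inv :: "letter list \<Rightarrow> nat" where
  "inv w = invl (odds w) + invl (evens w)"

lemma invl_append: "invl (P @ R) = invl P + invl R + (\<Sum>x\<leftarrow>P. count (mset R) (prv x))"
  by (induction P) auto

definition good :: "letter multiset \<times> letter multiset \<Rightarrow> bool" where
  "good L \<longleftrightarrow> (\<exists>g. set_mset (fst L) \<subseteq> {g} \<and> g \<notin># snd L) \<or> (\<exists>d. set_mset (snd L) \<subseteq> {d} \<and> d \<notin># fst L)"

lemma not_good_both: "a \<in># fst L \<Longrightarrow> a \<in># snd L \<Longrightarrow> \<not> good L"
  unfolding good_def by auto

lemma invl_swap: "prv a = c \<Longrightarrow> invl (P @ a # c # Q) = Suc (invl (P @ c # a # Q))"
proof -
  assume ac: "prv a = c"
  then have "prv c = nxt a" by (metis prv_prv)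
  then have "prv c \<noteq> a" by simp
  have m: "mset (a # c # Q) = mset (c # a # Q)" by simp
  have "invl (a # c # Q) = Suc (invl (c # a # Q))"
    using ac \<open>prv c \<noteq> a\<close> by simp
  then show ?thesis by (simp only: invl_append m)
qed

context cset begin

definition phi :: "letter multiset \<times> letter multiset \<Rightarrow> letter list \<Rightarrow> complex" where
  "phi L w = (if lab w = L \<and> good L then q ^ inv w else 0)"

lemma phi_sq: "phi L (u @ [a, a] @ v) = 0"
proof -
  have "a \<in># fst (lab (u @ [a, a] @ v))" "a \<in># snd (lab (u @ [a, a] @ v))"
    by (auto simp: lab_def odds_append evens_append)
  then show ?thesis unfolding phi_def using not_good_both by metis
qed

lemma phi_move: "b = nxt a \<Longrightarrow> c = nxt b \<Longrightarrow> phi L (u @ [a, b, c] @ v) = q * phi L (u @ [c, b, a] @ v)"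
proof -
  assume b: "b = nxt a" and c: "c = nxt b"
  then have ac: "prv a = c" by (simp add: nxt_nxt)
  have labeq: "lab (u @ [a, b, c] @ v) = lab (u @ [c, b, a] @ v)"
    by (auto simp: lab_def odds_append evens_append)
  have "inv (u @ [a, b, c] @ v) = Suc (inv (u @ [c, b, a] @ v))"
    unfolding inv_def using invl_swap[OF ac]
    by (simp add: odds_append evens_append)
  then show ?thesis unfolding phi_def labeq by simp
qed

lemma lin_rel: "lin \<psi> (rel a b c) = \<psi> [Z,X,Y] + a * \<psi> [X,Y,Z] + b * \<psi> [Y,Z,X] + c * \<psi> [Y,X,Z]
   + c * a * \<psi> [Z,Y,X] + c * b * \<psi> [X,Z,Y]"
  unfolding rel_def nc_sum_def mon3_def
  by (simp add: lin_add lin_smult lin_mono lin_zero poly_add poly_smult poly_mono poly_zero)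

lemma phi_sound: "a \<in> I \<Longrightarrow> lin (phi L) a = 0"
  unfolding I_M_def
proof (rule lin_ideal[OF gens_poly])
  fix g u v assume g: "g \<in> {nc_mul x x, nc_mul y y, nc_mul z z, rel \<omega> (\<omega>^2) t, rel (\<omega>^2) \<omega> t, gT t}"
  let ?\<psi> = "\<lambda>w. phi L (u @ w @ v)"
  have m1: "?\<psi> [Z,X,Y] = q * ?\<psi> [Y,X,Z]" using phi_move[of X Z Y L u v] by simp
  have m2: "?\<psi> [X,Y,Z] = q * ?\<psi> [Z,Y,X]" using phi_move[of Y X Z L u v] by simp
  have m3: "?\<psi> [Y,Z,X] = q * ?\<psi> [X,Z,Y]" using phi_move[of Z Y X L u v] by simp
  have rel0: "lin ?\<psi> (rel a b t) = 0" for a b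
    unfolding lin_rel m1 m2 m3 by (simp add: q_def algebra_simps)
  have sq0: "lin ?\<psi> (nc_mono [e, e]) = 0" for e
    using phi_sq[of L u e v] by (simp add: lin_mono)
  show "lin ?\<psi> g = 0"
    using g rel0 sq0 by (auto simp: x_def y_def z_def nc_var_def mono_mul_mono gT_def)
qed

end

function mk :: "letter list \<Rightarrow> letter list \<Rightarrow> letter list" where
  "mk [] ys = []" | "mk (a # xs) ys = a # mk ys xs"
  by pat_completeness auto
termination by (relation "measure (\<lambda>(xs, ys). length xs + length ys)") auto

definition cc :: "letter \<Rightarrow> letter \<Rightarrow> nat \<Rightarrow> letter list" where
  "cc a b k = concat (replicate k [a, b])"

lemma cc_0[simp]: "cc a b 0 = []" and cc_Suc: "cc a b (Suc k) = a # b # cc a b k"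
  by (simp_all add: cc_def)

lemma mk_rep_append: "mk (replicate i a @ xs) (replicate i b @ ys) = cc a b i @ mk xs ys"
  by (induction i) (auto simp: cc_def)

definition srt :: "letter \<Rightarrow> letter multiset \<Rightarrow> letter list" where
  "srt g M = replicate (count M (nxt g)) (nxt g) @ replicate (count M (prv g)) (prv g)"

definition rep :: "letter multiset \<times> letter multiset \<Rightarrow> letter list" where
  "rep L = (if \<exists>g. set_mset (fst L) \<subseteq> {g} \<and> g \<notin># snd L
     then (let g = SOME g. set_mset (fst L) \<subseteq> {g} \<and> g \<notin># snd L in mk (replicate (size (fst L)) g) (srt g (snd L)))
     else (let d = SOME d. set_mset (snd L) \<subseteq> {d} \<and> d \<notin># fst L in mk (srt d (fst L)) (replicate (size (snd L)) d)))"

definition pre :: "letter \<Rightarrow> letter multiset \<times> letter multiset \<Rightarrow> letter multiset \<times> letter multiset" where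
  "pre e L = (add_mset e (snd L), fst L)"

definition vs :: "letter multiset \<times> letter multiset \<Rightarrow> bool" where
  "vs L \<longleftrightarrow> size (snd L) \<le> size (fst L) \<and> size (fst L) \<le> Suc (size (snd L))"

lemma size_avoid: "g \<notin># E \<Longrightarrow> size E = count E (nxt g) + count E (prv g)"
proof (induction E)
  case empty then show ?case by simp
next
  case (add a E)
  then have "a = nxt g \<or> a = prv g" using letter_cases3[of g a] by auto
  with add show ?case by auto
qed

lemma srt_const: "set_mset M \<subseteq> {a} \<Longrightarrow> a \<noteq> g \<Longrightarrow> srt g M = replicate (size M) a"
proof -
  assume M: "set_mset M \<subseteq> {a}" and a: "a \<noteq> g"
  have M': "M = replicate_mset (size M) a" using set_mset_subset_singletonD[OF M] .
  have "a = nxt g \<or> a = prv g" using a letter_cases3[of g a] by auto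
  then show ?thesis
    by (subst (1 2) M') (auto simp: srt_def)
qed

lemma srt_empty[simp]: "srt g {#} = []" by (simp add: srt_def)

lemma rep_nil: "rep ({#}, {#}) = []"
  by (simp add: rep_def)

lemma rep_odd: "Mo \<noteq> {#} \<Longrightarrow> set_mset Mo \<subseteq> {g} \<Longrightarrow> g \<notin># E \<Longrightarrow> rep (Mo, E) = mk (replicate (size Mo) g) (srt g E)"
proof -
  assume Mo: "Mo \<noteq> {#}" "set_mset Mo \<subseteq> {g}" and E: "g \<notin># E"
  have ex: "\<exists>g. set_mset Mo \<subseteq> {g} \<and> g \<notin># E" using Mo E by blast
  have "(SOME g. set_mset Mo \<subseteq> {g} \<and> g \<notin># E) = g"
  proof (rule some_equality)
    show "set_mset Mo \<subseteq> {g} \<and> g \<notin># E" using Mo E by simp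
  next
    fix g' assume "set_mset Mo \<subseteq> {g'} \<and> g' \<notin># E"
    then show "g' = g" using Mo by (metis insert_absorb insert_not_empty set_mset_eq_empty_iff singleton_insert_inj_eq subset_singletonD)
  qed
  then show ?thesis using ex by (simp add: rep_def)
qed

lemma rep_even: "E \<noteq> {#} \<Longrightarrow> set_mset E \<subseteq> {d} \<Longrightarrow> d \<notin># Mo \<Longrightarrow> rep (Mo, E) = mk (srt d Mo) (replicate (size E) d)"
proof -
  assume E: "E \<noteq> {#}" "set_mset E \<subseteq> {d}" and Mo: "d \<notin># Mo"
  show ?thesis
  proof (cases "\<exists>g. set_mset Mo \<subseteq> {g} \<and> g \<notin># E")
    case True
    define g where "g = (SOME g. set_mset Mo \<subseteq> {g} \<and> g \<notin># E)"
    have g: "set_mset Mo \<subseteq> {g} \<and> g \<notin># E" unfolding g_def using True by (rule someI_ex)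
    have r: "rep (Mo, E) = mk (replicate (size Mo) g) (srt g E)" using True by (simp add: rep_def g_def Let_def)
    show ?thesis
    proof (cases "Mo = {#}")
      case True then show ?thesis using r by simp
    next
      case False
      then have "g \<in># Mo" using g by (metis all_not_in_conv set_mset_eq_empty_iff subset_singletonD insert_subset subset_antisym)
      then have gd: "g \<noteq> d" using Mo by auto
      have "set_mset E = {d}" using E by (metis set_mset_eq_empty_iff subset_singletonD)
      then have dE: "d \<in># E" by simp
      have "srt g E = replicate (size E) d" using srt_const[OF E(2)] dE g by metis
      moreover have "srt d Mo = replicate (size Mo) g" using srt_const g gd by auto
      ultimately show ?thesis using r by simp
    qed
  next
    case False
    have "(SOME d'. set_mset E \<subseteq> {d'} \<and> d' \<notin># Mo) = d"
    proof (rule some_equality)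
      show "set_mset E \<subseteq> {d} \<and> d \<notin># Mo" using E Mo by simp
    next
      fix d' assume "set_mset E \<subseteq> {d'} \<and> d' \<notin># Mo"
      then show "d' = d" using E by (metis insert_absorb insert_not_empty set_mset_eq_empty_iff singleton_insert_inj_eq subset_singletonD)
    qed
    then show ?thesis using False by (auto simp: rep_def Let_def)
  qed
qed

context cset begin

lemma move: "\<gamma> \<noteq> e1 \<Longrightarrow> e2 \<noteq> e1 \<Longrightarrow> e2 \<noteq> \<gamma> \<Longrightarrow> i \<le> k \<Longrightarrow>
   weq (mk (e1 # replicate i e2 @ R) (replicate k \<gamma>)) (kap e1 \<gamma> ^ i) (mk (replicate i e2 @ e1 # R) (replicate k \<gamma>))"
proof (induction i arbitrary: k)
  case 0 then show ?case by (simp add: weq_refl)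
next
  case (Suc i)
  then obtain k' where k: "k = Suc k'" and ik: "i \<le> k'" by (cases k) auto
  let ?Y = "replicate i e2 @ R" and ?G = "replicate k' \<gamma>"
  have "weq [e1, \<gamma>, e2] (kap e1 \<gamma>) [e2, \<gamma>, e1]" using Suc.prems by (intro weq_rel) auto
  then have s1: "weq ([e1, \<gamma>, e2] @ mk ?G ?Y) (kap e1 \<gamma>) ([e2, \<gamma>, e1] @ mk ?G ?Y)" by (rule weq_ctx_right)
  have "weq (mk (e1 # ?Y) ?G) (kap e1 \<gamma> ^ i) (mk (replicate i e2 @ e1 # R) ?G)"
    using Suc.IH[OF Suc.prems(1-3) ik] by simp
  then have s2: "weq ([e2, \<gamma>] @ mk (e1 # ?Y) ?G) (kap e1 \<gamma> ^ i) ([e2, \<gamma>] @ mk (replicate i e2 @ e1 # R) ?G)"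
    by (rule weq_ctx_left)
  have "weq ([e1, \<gamma>, e2] @ mk ?G ?Y) (kap e1 \<gamma> * kap e1 \<gamma> ^ i) ([e2, \<gamma>] @ mk (replicate i e2 @ e1 # R) ?G)"
    using weq_trans[OF s1] s2 by simp
  then show ?case using k by simp
qed

lemma zcc: "b \<noteq> a \<Longrightarrow> c \<noteq> a \<Longrightarrow> c \<noteq> b \<Longrightarrow> zer (a # cc b c i @ [a])"
proof (induction i)
  case 0 then show ?case using zer_sq by simp
next
  case (Suc i)
  have "weq [a, b, c] (kap a b) [c, b, a]" using Suc.prems by (intro weq_rel) auto
  then have "weq ([a, b, c] @ cc b c i @ [a]) (kap a b) ([c, b] @ (a # cc b c i @ [a]))"
    using weq_ctx_right by fastforce
  moreover have "zer ([c, b] @ (a # cc b c i @ [a]))" using Suc by (intro zer_left) auto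
  ultimately show ?case by (simp add: cc_Suc weq_zer)
qed

end

lemma good_pre: "good (pre e L) \<Longrightarrow> good L"
  unfolding good_def pre_def by auto

lemma lab_cons: "lab (e # w) = pre e (lab w)"
  by (simp add: lab_def pre_def)

lemma inv_cons: "inv (e # w) = count (snd (lab w)) (prv e) + inv w"
  by (simp add: inv_def lab_def)

lemma vs_lab: "vs (lab w)"
  using length_odds_evens[of w] by (auto simp: vs_def lab_def)

lemma lab_nil: "lab [] = ({#}, {#})" by (simp add: lab_def)
lemma inv_nil: "inv [] = 0" by (simp add: inv_def)
lemma good_nil: "good ({#}, {#})" by (simp add: good_def)

context cset begin

lemma prep:
  assumes gL: "good L" and vL: "vs L"
  shows "(good (pre e L) \<and> weq (e # rep L) (q ^ count (snd L) (prv e)) (rep (pre e L))) \<or>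
         (\<not> good (pre e L) \<and> zer (e # rep L))"
proof -
  obtain Mo E where L: "L = (Mo, E)" by (cases L)
  show ?thesis
  proof (cases "Mo = {#}")
    case True
    then have E: "E = {#}" using vL L by (simp add: vs_def)
    have g: "good (pre e L)" using L True E by (simp add: good_def pre_def)
    have "rep (pre e L) = [e]" using L True E rep_odd[of "{#e#}" e "{#}"] by (simp add: pre_def)
    moreover have "rep L = []" using L True E rep_nil by simp
    ultimately show ?thesis using g L E by (simp add: weq_refl)
  next
    case MoNE: False
    show ?thesis
    proof (cases "\<exists>g. set_mset Mo \<subseteq> {g} \<and> g \<notin># E")
      case True
      then obtain g where g: "set_mset Mo \<subseteq> {g}" "g \<notin># E" by blast
      have rL: "rep L = mk (replicate (size Mo) g) (srt g E)" using rep_odd MoNE g L by simp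
      obtain k where k: "size Mo = Suc k" using MoNE by (cases "size Mo") auto
      have gMo: "g \<in># Mo" using MoNE g by (metis set_mset_eq_empty_iff subset_singletonD singletonI)
      show ?thesis
      proof (cases "e = g")
        case True
        have ng: "\<not> good (pre e L)" using True gMo L by (intro not_good_both[of g]) (auto simp: pre_def)
        have "e # rep L = [g, g] @ mk (srt g E) (replicate k g)" using rL k True by simp
        then have "zer (e # rep L)" using zer_right[OF zer_sq] by metis
        then show ?thesis using ng by simp
      next
        case eg: False
        have gp: "good (pre e L)" using g eg L unfolding good_def pre_def by auto
        have rp: "rep (pre e L) = mk (srt g (add_mset e E)) (replicate (size Mo) g)"
          using rep_even[of Mo g "add_mset e E"] MoNE g eg L by (simp add: pre_def)
        have eL: "e # rep L = mk (e # srt g E) (replicate (size Mo) g)" using rL by simp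
        have "e = nxt g \<or> e = prv g" using eg letter_cases3[of g e] by auto
        then show ?thesis
        proof
          assume en: "e = nxt g"
          then have "srt g (add_mset e E) = e # srt g E" by (simp add: srt_def)
          moreover have "count E (prv e) = 0" using en g by (simp add: not_in_iff)
          ultimately show ?thesis using gp rp eL L by (simp add: weq_refl)
        next
          assume ep: "e = prv g"
          let ?i = "count E (nxt g)" and ?j = "count E (prv g)"
          have iM: "?i \<le> size Mo" using size_avoid[OF g(2)] vL L by (simp add: vs_def)
          have mv: "weq (mk (e # replicate ?i (nxt g) @ replicate ?j (prv g)) (replicate (size Mo) g)) (kap e g ^ ?i)
                      (mk (replicate ?i (nxt g) @ e # replicate ?j (prv g)) (replicate (size Mo) g))"
            using ep iM by (intro move) auto
          have "kap e g = q" using ep by (simp add: kap_def)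
          moreover have "count E (prv e) = ?i" using ep by (simp add: prv_prv)
          moreover have "srt g (add_mset e E) = replicate ?i (nxt g) @ e # replicate ?j (prv g)"
            using ep by (simp add: srt_def)
          moreover have "e # srt g E = e # replicate ?i (nxt g) @ replicate ?j (prv g)" by (simp add: srt_def)
          ultimately show ?thesis using gp rp eL L mv by simp
        qed
      qed
    next
      case False
      from gL L False obtain d where d: "set_mset E \<subseteq> {d}" "d \<notin># Mo" unfolding good_def by auto
      have ENE: "E \<noteq> {#}"
      proof
        assume "E = {#}"
        then have "size Mo = 1" using vL L MoNE by (auto simp: vs_def) (metis le_SucE le_zero_eq size_eq_0_iff_empty)
        then obtain a where "Mo = {#a#}" using size_1_singleton_mset by blast
        then show False using False \<open>E = {#}\<close> by auto
      qed
      have rL: "rep L = mk (srt d Mo) (replicate (size E) d)" using rep_even ENE d L by simp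
      have dE: "d \<in># E" using d ENE by (metis set_mset_eq_empty_iff subset_singletonD singletonI)
      show ?thesis
      proof (cases "e = d")
        case True
        have gp: "good (pre e L)" using True d L unfolding good_def pre_def by auto
        have rp: "rep (pre e L) = mk (replicate (Suc (size E)) d) (srt d Mo)"
          using rep_odd[of "add_mset d E" d Mo] d True L by (simp add: pre_def)
        have "e # rep L = mk (replicate (Suc (size E)) d) (srt d Mo)" using rL True by simp
        moreover have "count E (prv e) = 0" using True d by (metis count_eq_zero_iff nxt_neq(2) singletonD subsetD)
        ultimately show ?thesis using gp rp L by (simp add: weq_refl)
      next
        case ed: False
        let ?i = "count Mo (nxt d)" and ?j = "count Mo (prv d)"
        have i1: "?i \<noteq> 0"
        proof
          assume "?i = 0"
          then have "set_mset Mo \<subseteq> {prv d}" using d(2) letter_cases3[where a=d] by (auto simp: count_eq_zero_iff) (metis count_eq_zero_iff)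
          moreover have "prv d \<notin># E" using d by auto
          ultimately show False using False by blast
        qed
        have j1: "?j \<noteq> 0"
        proof
          assume "?j = 0"
          then have "set_mset Mo \<subseteq> {nxt d}" using d(2) letter_cases3[where a=d] by (auto simp: count_eq_zero_iff) (metis count_eq_zero_iff)
          moreover have "nxt d \<notin># E" using d by auto
          ultimately show False using False by blast
        qed
        have ng: "\<not> good (pre e L)"
        proof
          assume "good (pre e L)"
          then consider (a) g where "set_mset (add_mset e E) \<subseteq> {g}" | (b) d' where "set_mset Mo \<subseteq> {d'}"
            unfolding good_def pre_def L by auto
          then show False
          proof cases
            case a then show ?thesis using dE ed by auto
          next
            case b
            have "nxt d \<in># Mo" "prv d \<in># Mo" using i1 j1 by auto
            then have "nxt d = d'" "prv d = d'" using b by auto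
            then show ?thesis by (metis nxt_prv_neq(1))
          qed
        qed
        have sz: "size Mo = ?i + ?j" using size_avoid[OF d(2)] .
        have iE: "?i \<le> size E"
        proof -
          have "?j \<ge> 1" using j1 by simp
          moreover have "?i + ?j \<le> Suc (size E)" using sz vL L by (simp add: vs_def)
          ultimately show ?thesis by linarith
        qed
        have "e = nxt d \<or> e = prv d" using ed letter_cases3[of d e] by auto
        then have "zer (e # rep L)"
        proof
          assume en: "e = nxt d"
          obtain i' where i': "?i = Suc i'" using i1 by (cases ?i) auto
          have "e # rep L = [e, e] @ mk (replicate (size E) d) (replicate i' (nxt d) @ replicate ?j (prv d))"
            using rL en i' by (simp add: srt_def)
          then show ?thesis using zer_right[OF zer_sq] by metis
        next
          assume ep: "e = prv d"
          obtain j' where j': "?j = Suc j'" using j1 by (cases ?j) auto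
          have rE: "replicate (size E) d = replicate ?i d @ replicate (size E - ?i) d"
            using iE by (metis le_add_diff_inverse replicate_add)
          have "rep L = cc (nxt d) d ?i @ mk (replicate ?j (prv d)) (replicate (size E - ?i) d)"
            using rL by (simp only: srt_def rE mk_rep_append)
          then have "e # rep L = (e # cc (nxt d) d ?i @ [e]) @ mk (replicate (size E - ?i) d) (replicate j' (prv d))"
            using j' ep by simp
          moreover have "zer (e # cc (nxt d) d ?i @ [e])" using ep by (intro zcc) auto
          ultimately show ?thesis using zer_right by metis
        qed
        then show ?thesis using ng by simp
      qed
    qed
  qed
qed

lemma compl: "(good (lab w) \<and> weq w (q ^ inv w) (rep (lab w))) \<or> (\<not> good (lab w) \<and> zer w)"
proof (induction w)
  case Nil then show ?case by (simp add: lab_nil inv_nil good_nil rep_nil weq_refl)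
next
  case (Cons e w)
  show ?case
  proof (cases "good (lab w)")
    case True
    with Cons have w: "weq w (q ^ inv w) (rep (lab w))" by simp
    then have w': "weq (e # w) (q ^ inv w) (e # rep (lab w))" by (rule weq_cons)
    from prep[OF True vs_lab, of e] show ?thesis
    proof
      assume a: "good (pre e (lab w)) \<and> weq (e # rep (lab w)) (q ^ count (snd (lab w)) (prv e)) (rep (pre e (lab w)))"
      have "weq (e # w) (q ^ inv w * q ^ count (snd (lab w)) (prv e)) (rep (pre e (lab w)))"
        using weq_trans[OF w'] a by blast
      then show ?thesis using a by (simp add: lab_cons inv_cons power_add mult.commute)
    next
      assume a: "\<not> good (pre e (lab w)) \<and> zer (e # rep (lab w))"
      then show ?thesis using weq_zer[OF w'] by (simp add: lab_cons)
    qed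
  next
    case False
    with Cons have "zer w" by simp
    then have "zer ([e] @ w)" by (rule zer_left)
    then show ?thesis using False good_pre[of e "lab w"] by (auto simp: lab_cons)
  qed
qed

end

lemma lab_snoc: "lab (w @ [e]) = (if even (length w) then (add_mset e (fst (lab w)), snd (lab w))
    else (fst (lab w), add_mset e (snd (lab w))))"
  by (simp add: lab_def odds_append evens_append)

lemma sum_count_prv: "(\<Sum>x\<leftarrow>s. count {#e#} (prv x)) = count (mset s) (nxt e)"
  by (induction s) auto

lemma invl_snoc: "invl (s @ [e]) = invl s + count (mset s) (nxt e)"
  using invl_append[of s "[e]"] sum_count_prv[of e s] by simp

lemma inv_snoc: "inv (w @ [e]) = inv w + (if even (length w) then count (fst (lab w)) (nxt e) else count (snd (lab w)) (nxt e))"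
  by (simp add: inv_def lab_def odds_append evens_append invl_snoc)

lemma size_lab: "size (fst (lab w)) + size (snd (lab w)) = length w"
proof (induction w)
  case Nil then show ?case by (simp add: lab_def)
next
  case (Cons a w) then show ?case by (simp add: lab_def)
qed

lemma even_lab: "even (length w) \<longleftrightarrow> size (fst (lab w)) = size (snd (lab w))"
  using vs_lab[of w] size_lab[of w] by (auto simp: vs_def) presburger+

definition swp :: "'a \<times> 'a \<Rightarrow> 'a \<times> 'a" where "swp L = (snd L, fst L)"

context cset begin

definition B :: "nc \<Rightarrow> letter multiset \<times> letter multiset \<Rightarrow> complex" where
  "B f L = (\<Sum>w\<in>supp f. if lab w = L then f w * q ^ inv w else 0)"

definition alpha :: "nc \<Rightarrow> letter multiset \<times> letter multiset \<Rightarrow> complex" where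
  "alpha f L = lin (phi L) f"

lemma alpha_B: "alpha f L = (if good L then B f L else 0)"
  unfolding alpha_def lin_def B_def phi_def
  by (auto intro!: sum.cong)

lemma lin_right: "f \<in> nc_poly \<Longrightarrow> lin (phi L) (nc_mul f (nc_mono [e])) = (\<Sum>w\<in>supp f. f w * phi L (w @ [e]))"
  using lin_mono_g_mono[of f "phi L" "[]" "[e]"] by (simp add: nc_one_def[symmetric] mul_one_left lin_def)

lemma lin_left: "f \<in> nc_poly \<Longrightarrow> lin (phi L) (nc_mul (nc_mono [e]) f) = (\<Sum>w\<in>supp f. f w * phi L (e # w))"
  using lin_mono_g_mono[of f "phi L" "[e]" "[]"] by (simp add: nc_one_def[symmetric] mul_one_right lin_def)

lemma central_eq:
  assumes f: "f \<in> nc_poly" and c: "central_mod I f"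
  shows "(\<Sum>w\<in>supp f. f w * phi L (w @ [e])) = (\<Sum>w\<in>supp f. f w * phi L (e # w))"
proof -
  have "nc_diff (nc_mul f (nc_mono [e])) (nc_mul (nc_mono [e]) f) \<in> I"
    using c poly_mono by (simp add: central_mod_def)
  then have "lin (phi L) (nc_diff (nc_mul f (nc_mono [e])) (nc_mul (nc_mono [e]) f)) = 0"
    by (rule phi_sound)
  then show ?thesis using f by (simp add: lin_diff poly_mul poly_mono lin_right lin_left)
qed

lemma sum_transfer:
  assumes "\<And>w. lab (h w) = L \<longleftrightarrow> lab w = L'" and "\<And>w. lab w = L' \<Longrightarrow> inv (h w) = inv w + k"
  shows "(\<Sum>w\<in>supp f. f w * phi L (h w)) = (if good L then q ^ k * B f L' else 0)"
proof -
  have "f w * phi L (h w) = (if good L then q ^ k * (if lab w = L' then f w * q ^ inv w else 0) else 0)" for w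
    using assms[of w] by (auto simp: phi_def power_add)
  then show ?thesis by (simp add: B_def sum_distrib_left)
qed

lemma right_even: "size M1 = size M2 \<Longrightarrow>
  (\<Sum>w\<in>supp f. f w * phi (add_mset e M1, M2) (w @ [e])) = (if good (add_mset e M1, M2) then q ^ count M1 (nxt e) * B f (M1, M2) else 0)"
proof (rule sum_transfer)
  fix w assume s: "size M1 = size M2"
  show "lab (w @ [e]) = (add_mset e M1, M2) \<longleftrightarrow> lab w = (M1, M2)"
  proof
    assume a: "lab (w @ [e]) = (add_mset e M1, M2)"
    show "lab w = (M1, M2)"
    proof (cases "even (length w)")
      case True then show ?thesis using a by (simp add: lab_snoc prod_eq_iff)
    next
      case False
      then have "size (fst (lab w)) = Suc (size (snd (lab w)))" using vs_lab[of w] even_lab[of w] by (auto simp: vs_def)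
      moreover have "fst (lab w) = add_mset e M1" "add_mset e (snd (lab w)) = M2" using a False by (simp_all add: lab_snoc)
      ultimately show ?thesis using s by (metis size_add_mset n_not_Suc_n)
    qed
  next
    assume "lab w = (M1, M2)"
    then show "lab (w @ [e]) = (add_mset e M1, M2)" using s even_lab[of w] by (simp add: lab_snoc)
  qed
next
  fix w assume s: "size M1 = size M2" and "lab w = (M1, M2)"
  then show "inv (w @ [e]) = inv w + count M1 (nxt e)" using even_lab[of w] by (simp add: inv_snoc)
qed

lemma right_odd: "size M1 = Suc (size M2) \<Longrightarrow>
  (\<Sum>w\<in>supp f. f w * phi (M1, add_mset e M2) (w @ [e])) = (if good (M1, add_mset e M2) then q ^ count M2 (nxt e) * B f (M1, M2) else 0)"
proof (rule sum_transfer)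
  fix w assume s: "size M1 = Suc (size M2)"
  show "lab (w @ [e]) = (M1, add_mset e M2) \<longleftrightarrow> lab w = (M1, M2)"
  proof
    assume a: "lab (w @ [e]) = (M1, add_mset e M2)"
    show "lab w = (M1, M2)"
    proof (cases "even (length w)")
      case False then show ?thesis using a by (simp add: lab_snoc prod_eq_iff)
    next
      case True
      then have "size (fst (lab w)) = size (snd (lab w))" using even_lab[of w] by auto
      moreover have "add_mset e (fst (lab w)) = M1" "snd (lab w) = add_mset e M2" using a True by (simp_all add: lab_snoc)
      ultimately show ?thesis using s by (metis size_add_mset n_not_Suc_n)
    qed
  next
    assume "lab w = (M1, M2)"
    then show "lab (w @ [e]) = (M1, add_mset e M2)" using s even_lab[of w] by (simp add: lab_snoc)
  qed
next
  fix w assume s: "size M1 = Suc (size M2)" and "lab w = (M1, M2)"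
  then show "inv (w @ [e]) = inv w + count M2 (nxt e)" using even_lab[of w] by (simp add: inv_snoc)
qed

lemma left_sum: "(\<Sum>w\<in>supp f. f w * phi (add_mset e M2, M1) (e # w)) = (if good (add_mset e M2, M1) then q ^ count M2 (prv e) * B f (M1, M2) else 0)"
proof (rule sum_transfer)
  fix w
  show "lab (e # w) = (add_mset e M2, M1) \<longleftrightarrow> lab w = (M1, M2)"
    by (auto simp: lab_cons pre_def prod_eq_iff)
next
  fix w assume "lab w = (M1, M2)"
  then show "inv (e # w) = inv w + count M2 (prv e)" by (simp add: inv_cons)
qed

lemma left_zero: "e \<notin># P \<Longrightarrow> (\<Sum>w\<in>supp f. f w * phi (P, Q) (e # w)) = 0"
  by (rule sum.neutral) (auto simp: phi_def lab_cons pre_def)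

lemma K1:
  assumes f: "f \<in> nc_poly" and c: "central_mod I f"
    and s: "size Mo = Suc (size E)" and g: "good (Mo, E)"
  shows "B f (Mo, E) = 0"
proof -
  obtain e where e: "e \<notin># Mo" "good (Mo, add_mset e E)"
  proof (cases "\<exists>g. set_mset Mo \<subseteq> {g} \<and> g \<notin># E")
    case True
    then obtain g where g: "set_mset Mo \<subseteq> {g}" "g \<notin># E" by blast
    have "nxt g \<notin># Mo" using g by auto
    moreover have "good (Mo, add_mset (nxt g) E)" using g unfolding good_def by auto
    ultimately show ?thesis using that by blast
  next
    case False
    then obtain d where d: "set_mset E \<subseteq> {d}" "d \<notin># Mo" using g unfolding good_def by auto
    have "good (Mo, add_mset d E)" using d unfolding good_def by auto
    then show ?thesis using that d by blast
  qed
  have "(\<Sum>w\<in>supp f. f w * phi (Mo, add_mset e E) (w @ [e])) = (\<Sum>w\<in>supp f. f w * phi (Mo, add_mset e E) (e # w))"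
    by (rule central_eq[OF f c])
  then have "q ^ count E (nxt e) * B f (Mo, E) = 0"
    using right_odd[OF s, of f e] left_zero[OF e(1), of f "add_mset e E"] e(2) by simp
  then show ?thesis using q0 by simp
qed

lemma K2:
  assumes f: "f \<in> nc_poly" and c: "central_mod I f"
    and s: "size Mo = size E" and g: "set_mset Mo \<subseteq> {g}" "g \<notin># E"
  shows "B f (E, Mo) = B f (Mo, E) \<and> q ^ count E (prv g) * B f (Mo, E) = B f (Mo, E)
     \<and> q ^ count E (nxt g) * B f (Mo, E) = B f (Mo, E)"
proof -
  have c0: "count Mo (nxt g) = 0" "count Mo (prv g) = 0" "count E g = 0" using g by (auto simp: not_in_iff[symmetric])
  have "(\<Sum>w\<in>supp f. f w * phi (add_mset g Mo, E) (w @ [g])) = (\<Sum>w\<in>supp f. f w * phi (add_mset g Mo, E) (g # w))"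
    by (rule central_eq[OF f c])
  moreover have "good (add_mset g Mo, E)" using g unfolding good_def by auto
  ultimately have a: "B f (Mo, E) = B f (E, Mo)"
    using right_even[OF s, of f g] left_sum[of f g Mo E] c0 by simp
  have "(\<Sum>w\<in>supp f. f w * phi (add_mset (nxt g) E, Mo) (w @ [nxt g])) = (\<Sum>w\<in>supp f. f w * phi (add_mset (nxt g) E, Mo) (nxt g # w))"
    by (rule central_eq[OF f c])
  moreover have "good (add_mset (nxt g) E, Mo)" using g unfolding good_def by auto
  ultimately have b: "q ^ count E (prv g) * B f (E, Mo) = B f (Mo, E)"
    using right_even[OF s[symmetric], of f "nxt g"] left_sum[of f "nxt g" E Mo] c0 by (simp add: nxt_nxt)
  have "(\<Sum>w\<in>supp f. f w * phi (add_mset (prv g) E, Mo) (w @ [prv g])) = (\<Sum>w\<in>supp f. f w * phi (add_mset (prv g) E, Mo) (prv g # w))"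
    by (rule central_eq[OF f c])
  moreover have "good (add_mset (prv g) E, Mo)" using g unfolding good_def by auto
  ultimately have cc: "B f (E, Mo) = q ^ count E (nxt g) * B f (Mo, E)"
    using right_even[OF s[symmetric], of f "prv g"] left_sum[of f "prv g" E Mo] c0 by (simp add: prv_prv)
  have a': "B f (E, Mo) = B f (Mo, E)" using a by simp
  have b': "q ^ count E (prv g) * B f (Mo, E) = B f (Mo, E)" using b unfolding a' .
  have c': "q ^ count E (nxt g) * B f (Mo, E) = B f (Mo, E)" using cc unfolding a' by simp
  show ?thesis using a' b' c' by blast
qed

lemma q_pow_dvd: "q ^ k = 1 \<Longrightarrow> n dvd k"
proof -
  assume qk: "q ^ k = 1"
  have "(q ^ n) ^ (k div n) * q ^ (k mod n) = q ^ k"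
    by (simp only: power_mult[symmetric] power_add[symmetric] mult_div_mod_eq)
  then have qm: "q ^ (k mod n) = 1" using qk qn by simp
  have "k mod n = 0"
  proof (rule ccontr)
    assume "k mod n \<noteq> 0"
    moreover have "k mod n < n" using n0 by simp
    ultimately have "(- t) ^ (k mod n) \<noteq> 1" using prim by simp
    then show False using qm by (simp add: q_def)
  qed
  then show ?thesis by auto
qed

end

context cset begin

definition eqv :: "nc \<Rightarrow> nc \<Rightarrow> bool" where "eqv F H \<longleftrightarrow> nc_diff F H \<in> I"

lemma eqv_refl: "eqv F F"
proof -
  have "nc_diff F F = nc_zero" by (simp add: fun_eq_iff nc_diff_def nc_zero_def)
  then show ?thesis by (simp add: eqv_def I_zero)
qed

lemma eqv_sym: "eqv F H \<Longrightarrow> eqv H F"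
proof -
  assume "eqv F H"
  moreover have "nc_diff H F = nc_smult (-1) (nc_diff F H)" by (simp add: fun_eq_iff nc_diff_def nc_smult_def)
  ultimately show ?thesis by (simp add: eqv_def I_smult)
qed

lemma eqv_trans: "eqv F G \<Longrightarrow> eqv G H \<Longrightarrow> eqv F H"
proof -
  assume "eqv F G" "eqv G H"
  moreover have "nc_diff F H = nc_add (nc_diff F G) (nc_diff G H)" by (simp add: fun_eq_iff nc_diff_def nc_add_def)
  ultimately show ?thesis by (simp add: eqv_def I_add)
qed

lemma eqv_add: "eqv F F' \<Longrightarrow> eqv H H' \<Longrightarrow> eqv (nc_add F H) (nc_add F' H')"
proof -
  assume "eqv F F'" "eqv H H'"
  moreover have "nc_diff (nc_add F H) (nc_add F' H') = nc_add (nc_diff F F') (nc_diff H H')" by (simp add: fun_eq_iff nc_diff_def nc_add_def)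
  ultimately show ?thesis by (simp add: eqv_def I_add)
qed

lemma eqv_smult: "eqv F F' \<Longrightarrow> eqv (nc_smult c F) (nc_smult c F')"
proof -
  assume "eqv F F'"
  moreover have "nc_diff (nc_smult c F) (nc_smult c F') = nc_smult c (nc_diff F F')" by (simp add: fun_eq_iff nc_diff_def nc_smult_def algebra_simps)
  ultimately show ?thesis by (simp add: eqv_def I_smult)
qed

lemma eqv_mul: "F' \<in> nc_poly \<Longrightarrow> H \<in> nc_poly \<Longrightarrow> eqv F F' \<Longrightarrow> eqv H H' \<Longrightarrow> eqv (nc_mul F H) (nc_mul F' H')"
proof -
  assume p: "F' \<in> nc_poly" "H \<in> nc_poly" and e: "eqv F F'" "eqv H H'"
  have "nc_diff (nc_mul F H) (nc_mul F' H') = nc_add (nc_mul (nc_diff F F') H) (nc_mul F' (nc_diff H H'))"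
    by (simp only: mul_diff_left mul_diff_right) (simp add: fun_eq_iff nc_diff_def nc_add_def)
  then show ?thesis using p e unfolding eqv_def by (simp add: I_add I_mul_left I_mul_right)
qed

lemma eqv_nsum: "finite A \<Longrightarrow> (\<And>i. i \<in> A \<Longrightarrow> eqv (F i) (H i)) \<Longrightarrow> eqv (nsum F A) (nsum H A)"
proof -
  assume "finite A" "\<And>i. i \<in> A \<Longrightarrow> eqv (F i) (H i)"
  moreover have "nc_diff (nsum F A) (nsum H A) = nsum (\<lambda>i. nc_diff (F i) (H i)) A"
    by (simp add: fun_eq_iff nc_diff_def nsum_def sum_subtractf)
  ultimately show ?thesis unfolding eqv_def by (simp add: I_nsum)
qed

lemma weq_eqv: "weq u c v \<Longrightarrow> eqv (nc_mono u) (nc_smult c (nc_mono v))"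
  by (simp add: weq_def eqv_def)

lemma zer_eqv: "zer u \<Longrightarrow> eqv (nc_mono u) nc_zero"
proof -
  assume "zer u"
  moreover have "nc_diff (nc_mono u) nc_zero = nc_mono u" by (simp add: fun_eq_iff nc_diff_def nc_zero_def)
  ultimately show ?thesis by (simp add: zer_def eqv_def)
qed

lemma eqv_word: "eqv (nc_mono w) (nc_smult (phi (lab w) w) (nc_mono (rep (lab w))))"
  using compl[of w]
proof
  assume "good (lab w) \<and> weq w (q ^ inv w) (rep (lab w))"
  then show ?thesis by (simp add: phi_def weq_eqv)
next
  assume a: "\<not> good (lab w) \<and> zer w"
  have "nc_smult 0 (nc_mono (rep (lab w))) = nc_zero" by (simp add: fun_eq_iff nc_smult_def nc_zero_def)
  then show ?thesis using a zer_eqv by (simp add: phi_def)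
qed

lemma expand:
  assumes f: "f \<in> nc_poly"
  shows "eqv f (nsum (\<lambda>L. nc_smult (alpha f L) (nc_mono (rep L))) (lab ` supp f))"
proof -
  have fin: "finite (supp f)" using f by (simp add: poly_iff)
  have s1: "eqv f (nsum (\<lambda>w. nc_smult (f w * phi (lab w) w) (nc_mono (rep (lab w)))) (supp f))"
  proof -
    have "eqv (nsum (\<lambda>w. nc_smult (f w) (nc_mono w)) (supp f)) (nsum (\<lambda>w. nc_smult (f w) (nc_smult (phi (lab w) w) (nc_mono (rep (lab w))))) (supp f))"
      using fin by (intro eqv_nsum eqv_smult eqv_word)
    moreover have "nc_smult (f w) (nc_smult c m) = nc_smult (f w * c) m" for w c m
      by (simp add: fun_eq_iff nc_smult_def)
    ultimately show ?thesis using poly_expand[OF f] by simp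
  qed
  have s2: "nsum (\<lambda>w. nc_smult (f w * phi (lab w) w) (nc_mono (rep (lab w)))) (supp f)
     = nsum (\<lambda>L. nc_smult (alpha f L) (nc_mono (rep L))) (lab ` supp f)"
  proof (rule ext)
    fix v
    have "nsum (\<lambda>w. nc_smult (f w * phi (lab w) w) (nc_mono (rep (lab w)))) (supp f) v
       = (\<Sum>w\<in>supp f. f w * phi (lab w) w * nc_mono (rep (lab w)) v)"
      by (simp add: nsum_def nc_smult_def)
    also have "\<dots> = (\<Sum>L\<in>lab ` supp f. \<Sum>w\<in>{w. w \<in> supp f \<and> lab w = L}. f w * phi (lab w) w * nc_mono (rep (lab w)) v)"
      by (rule sum.image_gen[OF fin])
    also have "\<dots> = (\<Sum>L\<in>lab ` supp f. (\<Sum>w\<in>{w. w \<in> supp f \<and> lab w = L}. f w * phi L w) * nc_mono (rep L) v)"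
      by (auto simp: sum_distrib_right intro!: sum.cong)
    also have "\<dots> = (\<Sum>L\<in>lab ` supp f. alpha f L * nc_mono (rep L) v)"
    proof (rule sum.cong[OF refl])
      fix L
      have "(\<Sum>w\<in>{w. w \<in> supp f \<and> lab w = L}. f w * phi L w) = (\<Sum>w\<in>supp f. f w * phi L w)"
        using fin by (intro sum.mono_neutral_left) (auto simp: phi_def)
      then show "(\<Sum>w\<in>{w. w \<in> supp f \<and> lab w = L}. f w * phi L w) * nc_mono (rep L) v = alpha f L * nc_mono (rep L) v"
        by (simp add: alpha_def lin_def)
    qed
    also have "\<dots> = nsum (\<lambda>L. nc_smult (alpha f L) (nc_mono (rep L))) (lab ` supp f) v"
      by (simp add: nsum_def nc_smult_def)
    finally show "nsum (\<lambda>w. nc_smult (f w * phi (lab w) w) (nc_mono (rep (lab w)))) (supp f) v =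
      nsum (\<lambda>L. nc_smult (alpha f L) (nc_mono (rep L))) (lab ` supp f) v" .
  qed
  show ?thesis using s1 s2 by simp
qed

end

fun alt :: "letter \<Rightarrow> letter \<Rightarrow> nat \<Rightarrow> letter list" where
  "alt a b 0 = []" | "alt a b (Suc k) = a # alt b a k"

lemma alt_cc: "alt a b (2 * k) = cc a b k"
  by (induction k) (auto simp: cc_Suc)

lemma cc_snoc: "cc a b (Suc k) = cc a b k @ [a, b]"
  by (induction k) (auto simp: cc_Suc)

lemma cc_add: "cc a b (k + l) = cc a b k @ cc a b l"
  by (induction k) (auto simp: cc_Suc)

lemma cc_shift: "cc a b k @ [a] = a # cc b a k"
  by (induction k) (auto simp: cc_Suc)

lemma mk_cc: "mk (replicate k a) (replicate k b) = cc a b k"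
  using mk_rep_append[of k a "[]" b "[]"] by simp

lemma add_comm_nc: "nc_add f g = nc_add g f"
  by (simp add: fun_eq_iff nc_add_def add.commute)

context cset begin

definition U :: "letter \<Rightarrow> letter \<Rightarrow> nc" where
  "U a b = nc_pow (nc_add (nc_var a) (nc_var b)) (2 * n)"

definition pr :: "letter list \<Rightarrow> letter list \<Rightarrow> nc" where
  "pr u v = nc_add (nc_mono u) (nc_mono v)"

lemma pr_poly: "pr u v \<in> nc_poly" by (simp add: pr_def poly_add poly_mono)

lemma mul_pr_pr: "nc_mul (pr u1 u2) (pr v1 v2) =
   nc_add (nc_add (nc_mono (u1 @ v1)) (nc_mono (u2 @ v1))) (nc_add (nc_mono (u1 @ v2)) (nc_mono (u2 @ v2)))"
  by (simp add: pr_def mul_add_left mul_add_right mono_mul_mono)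

lemma eqv_zero_add: "zer u \<Longrightarrow> eqv (nc_add (nc_mono u) F) F"
proof -
  assume "zer u"
  moreover have "nc_diff (nc_add (nc_mono u) F) F = nc_mono u" by (simp add: fun_eq_iff nc_diff_def nc_add_def)
  ultimately show ?thesis by (simp add: eqv_def zer_def)
qed

lemma eqv_four: "zer u2 \<Longrightarrow> zer u3 \<Longrightarrow>
   eqv (nc_add (nc_add (nc_mono u1) (nc_mono u2)) (nc_add (nc_mono u3) (nc_mono u4))) (pr u1 u4)"
proof -
  assume z: "zer u2" "zer u3"
  have e: "nc_add (nc_add (nc_mono u1) (nc_mono u2)) (nc_add (nc_mono u3) (nc_mono u4)) =
     nc_add (nc_mono u2) (nc_add (nc_mono u3) (pr u1 u4))"
    by (simp add: fun_eq_iff nc_add_def pr_def algebra_simps)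
  show ?thesis unfolding e using z by (meson eqv_trans eqv_zero_add eqv_add eqv_refl)
qed

lemma eqv_four': "zer u1 \<Longrightarrow> zer u4 \<Longrightarrow>
   eqv (nc_add (nc_add (nc_mono u1) (nc_mono u2)) (nc_add (nc_mono u3) (nc_mono u4))) (pr u3 u2)"
proof -
  assume z: "zer u1" "zer u4"
  have e: "nc_add (nc_add (nc_mono u1) (nc_mono u2)) (nc_add (nc_mono u3) (nc_mono u4)) =
     nc_add (nc_mono u1) (nc_add (nc_mono u4) (pr u3 u2))"
    by (simp add: fun_eq_iff nc_add_def pr_def algebra_simps)
  show ?thesis unfolding e using z by (meson eqv_trans eqv_zero_add eqv_add eqv_refl)
qed

lemma pow_var: "a \<noteq> b \<Longrightarrow> k \<ge> 1 \<Longrightarrow> eqv (nc_pow (nc_add (nc_var a) (nc_var b)) k) (pr (alt a b k) (alt b a k))"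
proof (induction k)
  case 0 then show ?case by simp
next
  case (Suc k)
  show ?case
  proof (cases "k = 0")
    case True
    then show ?thesis by (simp add: mul_one_right nc_var_def pr_def eqv_refl)
  next
    case False
    let ?F = "nc_add (nc_var a) (nc_var b)"
    have Fp: "?F \<in> nc_poly" by (simp add: nc_var_def poly_add poly_mono)
    have "eqv (nc_mul ?F (nc_pow ?F k)) (nc_mul (pr [a] [b]) (pr (alt a b k) (alt b a k)))"
      using Suc False Fp by (intro eqv_mul) (auto simp: poly_pow pr_poly nc_var_def pr_def eqv_refl)
    moreover obtain k' where k': "k = Suc k'" using False by (cases k) auto
    have "eqv (nc_mul (pr [a] [b]) (pr (alt a b k) (alt b a k))) (pr (alt a b (Suc k)) (alt b a (Suc k)))"
    proof -
      have z1: "zer ([a] @ alt a b k)" using k' zer_right[OF zer_sq[of a], of "alt b a k'"] by simp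
      have z2: "zer ([b] @ alt b a k)" using k' zer_right[OF zer_sq[of b], of "alt a b k'"] by simp
      show ?thesis unfolding mul_pr_pr using eqv_four'[OF z1 z2] by simp
    qed
    ultimately show ?thesis by (auto intro: eqv_trans)
  qed
qed

lemma U_eqv: "a \<noteq> b \<Longrightarrow> eqv (U a b) (pr (cc a b n) (cc b a n))"
  using pow_var[of a b "2 * n"] n0 by (simp add: U_def alt_cc)

lemma U_poly: "U a b \<in> nc_poly" by (simp add: U_def poly_pow poly_add nc_var_def poly_mono)

lemma powU_eqv: "a \<noteq> b \<Longrightarrow> m \<ge> 1 \<Longrightarrow> eqv (nc_pow (U a b) m) (pr (cc a b (n * m)) (cc b a (n * m)))"
proof (induction m)
  case 0 then show ?case by simp
next
  case (Suc m)
  show ?case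
  proof (cases "m = 0")
    case True then show ?thesis using U_eqv Suc by (simp add: mul_one_right)
  next
    case False
    have "eqv (nc_mul (U a b) (nc_pow (U a b) m)) (nc_mul (pr (cc a b n) (cc b a n)) (pr (cc a b (n * m)) (cc b a (n * m))))"
      using Suc False by (intro eqv_mul U_eqv) (auto simp: poly_pow U_poly pr_poly)
    moreover have "eqv (nc_mul (pr (cc a b n) (cc b a n)) (pr (cc a b (n * m)) (cc b a (n * m)))) (pr (cc a b (n * Suc m)) (cc b a (n * Suc m)))"
    proof -
      obtain n' where n': "n = Suc n'" using n0 by (cases n) auto
      obtain m' where m': "n * m = Suc m'" using False n0 by (cases "n * m") auto
      have e1: "cc a b n = cc a b n' @ [a, b]" "cc b a n = cc b a n' @ [b, a]" using n' cc_snoc by auto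
      have e2: "cc b a (n * m) = b # a # cc b a m'" "cc a b (n * m) = a # b # cc a b m'" using m' cc_Suc by auto
      have z1: "zer (cc a b n @ cc b a (n * m))"
        using zer_ctx[OF zer_sq[of b], of "cc a b n' @ [a]" "a # cc b a m'"] unfolding e1 e2 by simp
      have z2: "zer (cc b a n @ cc a b (n * m))"
        using zer_ctx[OF zer_sq[of a], of "cc b a n' @ [b]" "b # cc a b m'"] unfolding e1 e2 by simp
      have "n * Suc m = n + n * m" by simp
      then show ?thesis unfolding mul_pr_pr by (simp only: cc_add[symmetric]) (rule eqv_four[OF z2 z1])
    qed
    ultimately show ?thesis by (auto intro: eqv_trans)
  qed
qed

end

context cset begin

definition Gp :: "letter \<Rightarrow> nat \<Rightarrow> nat \<Rightarrow> nc" where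
  "Gp g a b = nc_mul (nc_pow (U g (nxt g)) a) (nc_pow (U g (prv g)) b)"

lemma rep_pair:
  assumes Mo: "set_mset Mo \<subseteq> {g}" "Mo \<noteq> {#}" and E: "g \<notin># E" and s: "size Mo = size E"
  shows "rep (Mo, E) = cc g (nxt g) (count E (nxt g)) @ cc g (prv g) (count E (prv g))"
    and "rep (E, Mo) = cc (nxt g) g (count E (nxt g)) @ cc (prv g) g (count E (prv g))"
proof -
  let ?i = "count E (nxt g)" and ?j = "count E (prv g)"
  have sz: "size Mo = ?i + ?j" using s size_avoid[OF E] by simp
  have rg: "replicate (size Mo) g = replicate ?i g @ replicate ?j g" using sz by (simp add: replicate_add)
  have sr: "srt g E = replicate ?i (nxt g) @ replicate ?j (prv g)" by (simp add: srt_def)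
  show "rep (Mo, E) = cc g (nxt g) ?i @ cc g (prv g) ?j"
    using rep_odd[OF Mo(2) Mo(1) E] unfolding rg sr mk_rep_append mk_cc by simp
  show "rep (E, Mo) = cc (nxt g) g ?i @ cc (prv g) g ?j"
    using rep_even[OF Mo(2) Mo(1) E] unfolding rg sr mk_rep_append mk_cc by simp
qed

lemma Gp_rep:
  assumes Mo: "set_mset Mo \<subseteq> {g}" "Mo \<noteq> {#}" and E: "g \<notin># E" and s: "size Mo = size E"
    and di: "n dvd count E (nxt g)" and dj: "n dvd count E (prv g)"
  shows "eqv (Gp g (count E (nxt g) div n) (count E (prv g) div n)) (pr (rep (Mo, E)) (rep (E, Mo)))"
proof -
  let ?i = "count E (nxt g)" and ?j = "count E (prv g)"
  let ?a = "?i div n" and ?b = "?j div n"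
  have ia: "n * ?a = ?i" using di by simp
  have jb: "n * ?b = ?j" using dj by simp
  have sz: "size Mo = ?i + ?j" using s size_avoid[OF E] by simp
  have "size Mo \<noteq> 0" using Mo(2) by simp
  then have ij: "?i + ?j \<ge> 1" using sz by linarith
  note r = rep_pair[OF Mo E s]
  have ng: "nxt g \<noteq> g" "prv g \<noteq> g" "g \<noteq> nxt g" "g \<noteq> prv g" by simp_all
  show ?thesis
  proof (cases "?a = 0")
    case a0: True
    then have i0: "?i = 0" using ia by simp
    have "?b \<noteq> 0"
    proof
      assume "?b = 0"
      then have "?j = 0" using jb by simp
      then show False using ij i0 by simp
    qed
    then have "?b \<ge> 1" by simp
    then have "eqv (nc_pow (U g (prv g)) ?b) (pr (cc g (prv g) ?j) (cc (prv g) g ?j))"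
      using powU_eqv[of g "prv g" ?b] jb by simp
    then show ?thesis using a0 i0 r by (simp add: Gp_def mul_one_left)
  next
    case a1: False
    show ?thesis
    proof (cases "?b = 0")
      case b0: True
      then have j0: "?j = 0" using jb by simp
      have "eqv (nc_pow (U g (nxt g)) ?a) (pr (cc g (nxt g) ?i) (cc (nxt g) g ?i))"
        using powU_eqv[of g "nxt g" ?a] ia a1 by simp
      then show ?thesis using b0 j0 r by (simp add: Gp_def mul_one_right)
    next
      case b1: False
      have P1: "eqv (nc_pow (U g (nxt g)) ?a) (pr (cc g (nxt g) ?i) (cc (nxt g) g ?i))"
        using powU_eqv[of g "nxt g" ?a] ia a1 by simp
      have P2: "eqv (nc_pow (U g (prv g)) ?b) (pr (cc g (prv g) ?j) (cc (prv g) g ?j))"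
        using powU_eqv[of g "prv g" ?b] jb b1 by simp
      have A: "eqv (Gp g ?a ?b) (nc_mul (pr (cc g (nxt g) ?i) (cc (nxt g) g ?i)) (pr (cc g (prv g) ?j) (cc (prv g) g ?j)))"
        unfolding Gp_def by (rule eqv_mul[OF pr_poly poly_pow[OF U_poly] P1 P2])
      obtain i' where i': "?i = Suc i'" using a1 ia by (cases ?i) auto
      obtain j' where j': "?j = Suc j'" using b1 jb by (cases ?j) auto
      have e1: "cc g (nxt g) ?i = cc g (nxt g) i' @ [g, nxt g]" "cc (nxt g) g ?i = cc (nxt g) g i' @ [nxt g, g]"
        using i' cc_snoc by auto
      have e2: "cc g (prv g) ?j = g # prv g # cc g (prv g) j'" "cc (prv g) g ?j = prv g # g # cc (prv g) g j'"
        using j' cc_Suc by auto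
      have z1: "zer (cc (nxt g) g ?i @ cc g (prv g) ?j)"
        using zer_ctx[OF zer_sq[of g], of "cc (nxt g) g i' @ [nxt g]" "prv g # cc g (prv g) j'"] unfolding e1 e2 by simp
      have "zer (g # cc (nxt g) (prv g) 1 @ [g])" by (rule zcc) simp_all
      then have z2: "zer (cc g (nxt g) ?i @ cc (prv g) g ?j)"
        using zer_ctx[of "g # cc (nxt g) (prv g) 1 @ [g]" "cc g (nxt g) i'" "cc (prv g) g j'"] unfolding e1 e2
        by (simp add: cc_Suc)
      have Bq: "eqv (nc_mul (pr (cc g (nxt g) ?i) (cc (nxt g) g ?i)) (pr (cc g (prv g) ?j) (cc (prv g) g ?j)))
             (pr (cc g (nxt g) ?i @ cc g (prv g) ?j) (cc (nxt g) g ?i @ cc (prv g) g ?j))"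
        unfolding mul_pr_pr by (rule eqv_four[OF z1 z2])
      show ?thesis using eqv_trans[OF A Bq] r by simp
    qed
  qed
qed

end

lemma good_swp: "good (swp L) = good L"
  unfolding good_def swp_def by auto

lemma swp_swp[simp]: "swp (swp L) = L" by (simp add: swp_def)

lemma subalg_pow: "F \<in> nc_subalg G \<Longrightarrow> nc_pow F k \<in> nc_subalg G"
  by (induction k) (auto intro: nc_subalg.intros)

lemma subalg_zero: "nc_zero \<in> nc_subalg G"
proof -
  have "nc_smult 0 nc_one \<in> nc_subalg G" by (intro nc_subalg.intros)
  moreover have "nc_smult 0 nc_one = nc_zero" by (simp add: fun_eq_iff nc_smult_def nc_zero_def)
  ultimately show ?thesis by simp
qed

lemma subalg_nsum: "finite A \<Longrightarrow> (\<And>i. i \<in> A \<Longrightarrow> F i \<in> nc_subalg G) \<Longrightarrow> nsum F A \<in> nc_subalg G"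
  by (induction A rule: finite_induct) (auto simp: nsum_empty nsum_insert subalg_zero intro: nc_subalg.intros)

context cset begin

definition GS :: "nc set" where
  "GS = {nc_pow (nc_add x y) (2*n), nc_pow (nc_add x z) (2*n), nc_pow (nc_add y z) (2*n)}"

lemma U_comm: "U a b = U b a" by (simp add: U_def add_comm_nc)

lemma U_GS: "a \<noteq> b \<Longrightarrow> U a b \<in> GS"
proof -
  assume ab: "a \<noteq> b"
  have base: "U X Y \<in> GS" "U X Z \<in> GS" "U Y Z \<in> GS" by (simp_all add: U_def GS_def x_def y_def z_def)
  show ?thesis using ab base U_comm by (cases a; cases b) auto
qed

lemma GS_U: "g \<in> GS \<Longrightarrow> \<exists>a b. a \<noteq> b \<and> g = U a b"
  unfolding GS_def U_def x_def y_def z_def by auto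

lemma Gp_sub: "Gp g a b \<in> nc_subalg GS"
  unfolding Gp_def by (intro nc_subalg.mul subalg_pow nc_subalg.gen U_GS) simp_all

definition G :: "letter multiset \<times> letter multiset \<Rightarrow> nc" where
  "G L = (if fst L = {#} then nc_add nc_one nc_one
   else if \<exists>g. set_mset (fst L) \<subseteq> {g} \<and> g \<notin># snd L then
     (let g = SOME g. set_mset (fst L) \<subseteq> {g} \<and> g \<notin># snd L in Gp g (count (snd L) (nxt g) div n) (count (snd L) (prv g) div n))
   else (let d = SOME d. set_mset (snd L) \<subseteq> {d} \<and> d \<notin># fst L in Gp d (count (fst L) (nxt d) div n) (count (fst L) (prv d) div n)))"

lemma G_sub: "G L \<in> nc_subalg GS"
  unfolding G_def Let_def by (auto intro: nc_subalg.intros Gp_sub)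

lemma pr_comm: "pr u v = pr v u" by (simp add: pr_def add_comm_nc)

lemma G_eqv:
  assumes g: "good L" and s: "size (fst L) = size (snd L)"
    and d1: "\<forall>a. n dvd count (fst L) a" and d2: "\<forall>a. n dvd count (snd L) a"
  shows "eqv (G L) (pr (rep L) (rep (swp L)))"
proof -
  obtain Mo E where L: "L = (Mo, E)" by (cases L)
  show ?thesis
  proof (cases "Mo = {#}")
    case True
    then have "E = {#}" using s L by simp
    then show ?thesis using True L by (simp add: G_def swp_def rep_nil pr_def nc_one_def eqv_refl)
  next
    case MoNE: False
    show ?thesis
    proof (cases "\<exists>g. set_mset Mo \<subseteq> {g} \<and> g \<notin># E")
      case True
      define g where "g = (SOME g. set_mset Mo \<subseteq> {g} \<and> g \<notin># E)"
      have gp: "set_mset Mo \<subseteq> {g} \<and> g \<notin># E" unfolding g_def using True by (rule someI_ex)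
      have "G L = Gp g (count E (nxt g) div n) (count E (prv g) div n)"
        using True MoNE L by (simp add: G_def g_def Let_def)
      moreover have "eqv (Gp g (count E (nxt g) div n) (count E (prv g) div n)) (pr (rep (Mo, E)) (rep (E, Mo)))"
        using gp MoNE s d2 L by (intro Gp_rep) auto
      ultimately show ?thesis using L by (simp add: swp_def)
    next
      case False
      then have ex: "\<exists>d. set_mset E \<subseteq> {d} \<and> d \<notin># Mo" using g L unfolding good_def by auto
      define d where "d = (SOME d. set_mset E \<subseteq> {d} \<and> d \<notin># Mo)"
      have dp: "set_mset E \<subseteq> {d} \<and> d \<notin># Mo" unfolding d_def using ex by (rule someI_ex)
      have ENE: "E \<noteq> {#}" using s L MoNE by auto
      have "G L = Gp d (count Mo (nxt d) div n) (count Mo (prv d) div n)"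
        using False MoNE L by (auto simp: G_def d_def Let_def)
      moreover have "eqv (Gp d (count Mo (nxt d) div n) (count Mo (prv d) div n)) (pr (rep (E, Mo)) (rep (Mo, E)))"
        using dp ENE s d1 L by (intro Gp_rep) auto
      ultimately show ?thesis using L by (simp add: swp_def pr_comm)
    qed
  qed
qed

lemma B_vs: "B f L \<noteq> 0 \<Longrightarrow> vs L"
proof -
  assume B0: "B f L \<noteq> 0"
  have "\<exists>w\<in>supp f. lab w = L"
  proof (rule ccontr)
    assume "\<not> (\<exists>w\<in>supp f. lab w = L)"
    then have "B f L = 0" unfolding B_def by (intro sum.neutral) auto
    then show False using B0 by simp
  qed
  then show ?thesis using vs_lab by blast
qed

lemma dvd_counts:
  assumes g: "set_mset Mo \<subseteq> {g}" "g \<notin># E" and s: "size Mo = size E"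
    and d: "n dvd count E (nxt g)" "n dvd count E (prv g)"
  shows "(\<forall>a. n dvd count Mo a) \<and> (\<forall>a. n dvd count E a)"
proof -
  have cg: "count E g = 0" using g(2) by (simp add: not_in_iff)
  have E: "n dvd count E a" for a
  proof -
    have "a = g \<or> a = nxt g \<or> a = prv g" using letter_cases3[of a g] by auto
    then show ?thesis using d cg by auto
  qed
  have sz: "size Mo = count E (nxt g) + count E (prv g)" using s size_avoid[OF g(2)] by simp
  have dM: "n dvd size Mo" using d unfolding sz by (rule dvd_add)
  have Mo: "n dvd count Mo a" for a
  proof (cases "a = g")
    case True
    have "count Mo g = size Mo" using set_mset_subset_singletonD[OF g(1)] by (metis count_replicate_mset)
    then show ?thesis using True dM by simp
  next
    case False
    then have "a \<notin># Mo" using g(1) by auto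
    then show ?thesis by (simp add: not_in_iff)
  qed
  show ?thesis using E Mo by blast
qed

lemma CL:
  assumes f: "f \<in> nc_poly" and c: "central_mod I f" and a: "alpha f L \<noteq> 0"
  shows "good L \<and> size (fst L) = size (snd L) \<and> B f (swp L) = B f L \<and>
         (\<forall>a. n dvd count (fst L) a) \<and> (\<forall>a. n dvd count (snd L) a)"
proof -
  obtain Mo E where L: "L = (Mo, E)" by (cases L)
  have g: "good L" and B0: "B f L \<noteq> 0" using a by (auto simp: alpha_B split: if_splits)
  have "vs L" using B_vs[OF B0] .
  then have v: "size E \<le> size Mo" "size Mo \<le> Suc (size E)" using L by (auto simp: vs_def)
  have s: "size Mo = size E"
  proof (rule ccontr)
    assume "size Mo \<noteq> size E"
    then have "size Mo = Suc (size E)" using v by simp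
    then have "B f (Mo, E) = 0" using K1[OF f c] g L by simp
    then show False using B0 L by simp
  qed
  from g L consider (t1) g0 where "set_mset Mo \<subseteq> {g0}" "g0 \<notin># E" | (t2) d where "set_mset E \<subseteq> {d}" "d \<notin># Mo"
    unfolding good_def by auto
  then show ?thesis
  proof cases
    case t1
    note k = K2[OF f c s t1]
    have "q ^ count E (prv g0) = 1" "q ^ count E (nxt g0) = 1" using k B0 L by auto
    then have "n dvd count E (prv g0)" "n dvd count E (nxt g0)" using q_pow_dvd by auto
    then show ?thesis using dvd_counts[OF t1 s] k g L s by (simp add: swp_def)
  next
    case t2
    note k = K2[OF f c s[symmetric] t2]
    have B0': "B f (E, Mo) \<noteq> 0" using k B0 L by simp
    have "q ^ count Mo (prv d) = 1" "q ^ count Mo (nxt d) = 1" using k B0' by auto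
    then have "n dvd count Mo (prv d)" "n dvd count Mo (nxt d)" using q_pow_dvd by auto
    then show ?thesis using dvd_counts[OF t2 s[symmetric]] k g L s by (simp add: swp_def)
  qed
qed

lemma alpha_swp:
  assumes f: "f \<in> nc_poly" and c: "central_mod I f"
  shows "alpha f (swp L) = alpha f L"
proof -
  have aux: "alpha f (swp M) = alpha f M" if "alpha f M \<noteq> 0" for M
  proof -
    have "good M" "B f (swp M) = B f M" using CL[OF f c that] by auto
    then show ?thesis by (simp add: alpha_B good_swp)
  qed
  show ?thesis
  proof (cases "alpha f L = 0")
    case True
    show ?thesis
    proof (rule ccontr)
      assume "alpha f (swp L) \<noteq> alpha f L"
      then have "alpha f (swp L) \<noteq> 0" using True by simp
      then have "alpha f (swp (swp L)) = alpha f (swp L)" by (rule aux)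
      then show False using True \<open>alpha f (swp L) \<noteq> 0\<close> by simp
    qed
  next
    case False then show ?thesis by (rule aux)
  qed
qed

end

lemma diff_nsum_smult: "nc_diff (nsum (\<lambda>u. nc_smult (c u) (A u)) S) (nsum (\<lambda>u. nc_smult (c u) (B u)) S)
   = nsum (\<lambda>u. nc_smult (c u) (nc_diff (A u) (B u))) S"
  by (simp add: fun_eq_iff nsum_def nc_diff_def nc_smult_def sum_subtractf algebra_simps)

context cset begin

lemma cent_letter:
  assumes F: "F \<in> nc_poly" and H: "\<And>e. eqv (nc_mul F (nc_mono [e])) (nc_mul (nc_mono [e]) F)"
  shows "central_mod I F"
proof -
  have W: "eqv (nc_mul F (nc_mono w)) (nc_mul (nc_mono w) F)" for w
  proof (induction w)
    case Nil then show ?case by (simp add: nc_one_def[symmetric] mul_one_left mul_one_right eqv_refl)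
  next
    case (Cons e w)
    have m: "nc_mono (e # w) = nc_mul (nc_mono [e]) (nc_mono w)" by (simp add: mono_mul_mono)
    have s1: "eqv (nc_mul (nc_mul F (nc_mono [e])) (nc_mono w)) (nc_mul (nc_mul (nc_mono [e]) F) (nc_mono w))"
      by (rule eqv_mul[OF poly_mul[OF poly_mono F] poly_mono H eqv_refl])
    have s2: "eqv (nc_mul (nc_mono [e]) (nc_mul F (nc_mono w))) (nc_mul (nc_mono [e]) (nc_mul (nc_mono w) F))"
      by (rule eqv_mul[OF poly_mono poly_mul[OF F poly_mono] eqv_refl Cons])
    show ?case using s1 s2 unfolding m nc_mul_assoc by (blast intro: eqv_trans)
  qed
  show ?thesis unfolding central_mod_def
  proof
    fix b assume b: "b \<in> nc_poly"
    let ?B = "nsum (\<lambda>u. nc_smult (b u) (nc_mono u)) (supp b)"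
    have e: "b = ?B" by (rule poly_expand[OF b])
    have l: "nc_mul F b = nsum (\<lambda>u. nc_smult (b u) (nc_mul F (nc_mono u))) (supp b)"
      using arg_cong[OF e, of "nc_mul F"] by (simp add: mul_nsum_right mul_smult_right)
    have r: "nc_mul b F = nsum (\<lambda>u. nc_smult (b u) (nc_mul (nc_mono u) F)) (supp b)"
      using arg_cong[OF e, of "\<lambda>X. nc_mul X F"] by (simp add: mul_nsum_left mul_smult_left)
    have "nc_diff (nc_mul F b) (nc_mul b F) = nsum (\<lambda>u. nc_smult (b u) (nc_diff (nc_mul F (nc_mono u)) (nc_mul (nc_mono u) F))) (supp b)"
      unfolding l r diff_nsum_smult ..
    also have "\<dots> \<in> I"
      using b W by (intro I_nsum I_smult) (auto simp: poly_iff eqv_def)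
    finally show "nc_diff (nc_mul F b) (nc_mul b F) \<in> I" .
  qed
qed

lemma eqv_pr_z2: "zer v \<Longrightarrow> eqv (pr u v) (nc_mono u)"
proof -
  assume "zer v"
  moreover have "nc_diff (pr u v) (nc_mono u) = nc_mono v" by (simp add: fun_eq_iff pr_def nc_diff_def nc_add_def)
  ultimately show ?thesis by (simp add: eqv_def zer_def)
qed

lemma eqv_pr_z1: "zer u \<Longrightarrow> eqv (pr u v) (nc_mono v)"
  using eqv_pr_z2[of u v] by (simp add: pr_comm)

lemma kap_pow: "kap a b ^ n = 1"
  using qn by (simp add: kap_def power_one_over)

lemma weq1_eqv: "weq u 1 v \<Longrightarrow> eqv (nc_mono u) (nc_mono v)"
proof -
  assume "weq u 1 v"
  moreover have "nc_smult 1 (nc_mono v) = nc_mono v" by (simp add: fun_eq_iff nc_smult_def)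
  ultimately show ?thesis using weq_eqv by metis
qed

lemma pe_eqv: "a \<noteq> b \<Longrightarrow> eqv (pr (cc a b n @ [e]) (cc b a n @ [e])) (pr (e # cc a b n) (e # cc b a n))"
proof -
  assume ab: "a \<noteq> b"
  obtain n' where n': "n = Suc n'" using n0 by (cases n) auto
  have c1: "cc a b n = cc a b n' @ [a, b]" "cc b a n = cc b a n' @ [b, a]" using n' cc_snoc by auto
  have c2: "cc a b n = a # b # cc a b n'" "cc b a n = b # a # cc b a n'" using n' cc_Suc by auto
  consider "e = a" | "e = b" | "e \<noteq> a" "e \<noteq> b" by blast
  then show ?thesis
  proof cases
    case 1
    have z1: "zer (cc b a n @ [e])" using 1 zer_left[OF zer_sq[of a], of "cc b a n' @ [b]"] unfolding c1 by simp
    have z2: "zer (e # cc a b n)" using 1 zer_right[OF zer_sq[of a], of "b # cc a b n'"] unfolding c2 by simp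
    have "eqv (pr (cc a b n @ [e]) (cc b a n @ [e])) (nc_mono (e # cc b a n))"
      using eqv_pr_z2[OF z1] 1 by (simp add: cc_shift)
    moreover have "eqv (pr (e # cc a b n) (e # cc b a n)) (nc_mono (e # cc b a n))" by (rule eqv_pr_z1[OF z2])
    ultimately show ?thesis by (meson eqv_sym eqv_trans)
  next
    case 2
    have z1: "zer (cc a b n @ [e])" using 2 zer_left[OF zer_sq[of b], of "cc a b n' @ [a]"] unfolding c1 by simp
    have z2: "zer (e # cc b a n)" using 2 zer_right[OF zer_sq[of b], of "a # cc b a n'"] unfolding c2 by simp
    have "eqv (pr (cc a b n @ [e]) (cc b a n @ [e])) (nc_mono (e # cc a b n))"
      using eqv_pr_z1[OF z1] 2 by (simp add: cc_shift)
    moreover have "eqv (pr (e # cc a b n) (e # cc b a n)) (nc_mono (e # cc a b n))" by (rule eqv_pr_z2[OF z2])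
    ultimately show ?thesis by (meson eqv_sym eqv_trans)
  next
    case 3
    have m1: "weq (mk (e # replicate n a @ []) (replicate n b)) (kap e b ^ n) (mk (replicate n a @ e # []) (replicate n b))"
      using 3 ab by (intro move) auto
    have m2: "weq (mk (e # replicate n b @ []) (replicate n a)) (kap e a ^ n) (mk (replicate n b @ e # []) (replicate n a))"
      using 3 ab by (intro move) auto
    have "mk (replicate n a @ [e]) (replicate n b) = cc a b n @ [e]"
      using mk_rep_append[of n a "[e]" b "[]"] by simp
    moreover have "mk (replicate n b @ [e]) (replicate n a) = cc b a n @ [e]"
      using mk_rep_append[of n b "[e]" a "[]"] by simp
    moreover have "mk (e # replicate n a) (replicate n b) = e # cc b a n" by (simp add: mk_cc)
    moreover have "mk (e # replicate n b) (replicate n a) = e # cc a b n" by (simp add: mk_cc)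
    ultimately have w1: "weq (e # cc b a n) 1 (cc a b n @ [e])" and w2: "weq (e # cc a b n) 1 (cc b a n @ [e])"
      using m1 m2 kap_pow by simp_all
    have "eqv (pr (e # cc a b n) (e # cc b a n)) (pr (cc b a n @ [e]) (cc a b n @ [e]))"
      unfolding pr_def by (intro eqv_add weq1_eqv w1 w2)
    then show ?thesis by (simp add: pr_comm eqv_sym)
  qed
qed

lemma U_central: "a \<noteq> b \<Longrightarrow> central_mod I (U a b)"
proof (rule cent_letter[OF U_poly])
  fix e assume ab: "a \<noteq> b"
  let ?P = "pr (cc a b n) (cc b a n)"
  have s1: "eqv (nc_mul (U a b) (nc_mono [e])) (nc_mul ?P (nc_mono [e]))"
    by (rule eqv_mul[OF pr_poly poly_mono U_eqv[OF ab] eqv_refl])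
  have s2: "eqv (nc_mul (nc_mono [e]) (U a b)) (nc_mul (nc_mono [e]) ?P)"
    by (rule eqv_mul[OF poly_mono U_poly eqv_refl U_eqv[OF ab]])
  have p1: "nc_mul ?P (nc_mono [e]) = pr (cc a b n @ [e]) (cc b a n @ [e])"
    by (simp add: pr_def mul_add_left mono_mul_mono)
  have p2: "nc_mul (nc_mono [e]) ?P = pr (e # cc a b n) (e # cc b a n)"
    by (simp add: pr_def mul_add_right mono_mul_mono)
  show "eqv (nc_mul (U a b) (nc_mono [e])) (nc_mul (nc_mono [e]) (U a b))"
    using s1 s2 pe_eqv[OF ab, of e] unfolding p1 p2 by (meson eqv_sym eqv_trans)
qed

lemma central_add: "Pa \<in> nc_poly \<Longrightarrow> central_mod I Pa \<Longrightarrow> central_mod I Pb \<Longrightarrow> central_mod I (nc_add Pa Pb)"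
  unfolding central_mod_def
proof
  fix c assume "Pa \<in> nc_poly" "\<forall>b\<in>nc_poly. nc_diff (nc_mul Pa b) (nc_mul b Pa) \<in> I"
    "\<forall>b\<in>nc_poly. nc_diff (nc_mul Pb b) (nc_mul b Pb) \<in> I" and c: "c \<in> nc_poly"
  then have a: "nc_diff (nc_mul Pa c) (nc_mul c Pa) \<in> I" and b: "nc_diff (nc_mul Pb c) (nc_mul c Pb) \<in> I" by auto
  have "nc_diff (nc_mul (nc_add Pa Pb) c) (nc_mul c (nc_add Pa Pb)) = nc_add (nc_diff (nc_mul Pa c) (nc_mul c Pa)) (nc_diff (nc_mul Pb c) (nc_mul c Pb))"
    by (simp only: mul_add_left mul_add_right) (simp add: fun_eq_iff nc_add_def nc_diff_def)
  then show "nc_diff (nc_mul (nc_add Pa Pb) c) (nc_mul c (nc_add Pa Pb)) \<in> I" using a b I_add by simp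
qed

lemma central_smult: "central_mod I Pa \<Longrightarrow> central_mod I (nc_smult k Pa)"
  unfolding central_mod_def
proof
  fix c assume "\<forall>b\<in>nc_poly. nc_diff (nc_mul Pa b) (nc_mul b Pa) \<in> I" and c: "c \<in> nc_poly"
  then have a: "nc_diff (nc_mul Pa c) (nc_mul c Pa) \<in> I" by auto
  have "nc_diff (nc_mul (nc_smult k Pa) c) (nc_mul c (nc_smult k Pa)) = nc_smult k (nc_diff (nc_mul Pa c) (nc_mul c Pa))"
    by (simp only: mul_smult_left mul_smult_right) (simp add: fun_eq_iff nc_smult_def nc_diff_def algebra_simps)
  then show "nc_diff (nc_mul (nc_smult k Pa) c) (nc_mul c (nc_smult k Pa)) \<in> I" using a I_smult by simp
qed

lemma central_mul: "Pa \<in> nc_poly \<Longrightarrow> Pb \<in> nc_poly \<Longrightarrow> central_mod I Pa \<Longrightarrow> central_mod I Pb \<Longrightarrow> central_mod I (nc_mul Pa Pb)"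
  unfolding central_mod_def
proof
  fix c assume Pa: "Pa \<in> nc_poly" and Pb: "Pb \<in> nc_poly" and "\<forall>b\<in>nc_poly. nc_diff (nc_mul Pa b) (nc_mul b Pa) \<in> I"
    "\<forall>b\<in>nc_poly. nc_diff (nc_mul Pb b) (nc_mul b Pb) \<in> I" and c: "c \<in> nc_poly"
  then have a: "nc_diff (nc_mul Pa c) (nc_mul c Pa) \<in> I" and b: "nc_diff (nc_mul Pb c) (nc_mul c Pb) \<in> I" by auto
  have "nc_diff (nc_mul (nc_mul Pa Pb) c) (nc_mul c (nc_mul Pa Pb)) =
     nc_add (nc_mul Pa (nc_diff (nc_mul Pb c) (nc_mul c Pb))) (nc_mul (nc_diff (nc_mul Pa c) (nc_mul c Pa)) Pb)"
    by (simp only: mul_diff_left mul_diff_right nc_mul_assoc) (simp add: fun_eq_iff nc_add_def nc_diff_def)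
  then show "nc_diff (nc_mul (nc_mul Pa Pb) c) (nc_mul c (nc_mul Pa Pb)) \<in> I"
    using a b Pa Pb by (simp add: I_add I_mul_left I_mul_right)
qed

lemma subalg_central: "F \<in> nc_subalg GS \<Longrightarrow> F \<in> nc_poly \<and> central_mod I F"
proof (induction rule: nc_subalg.induct)
  case one
  have "nc_diff (nc_mul nc_one b) (nc_mul b nc_one) = nc_zero" for b
    by (simp add: mul_one_left mul_one_right fun_eq_iff nc_diff_def nc_zero_def)
  then show ?case by (simp add: poly_one central_mod_def I_zero)
next
  case (gen g)
  then obtain a b where "a \<noteq> b" "g = U a b" using GS_U by blast
  then show ?case using U_poly U_central by simp
next
  case (add a b) then show ?case by (simp add: poly_add central_add)
next
  case (smult a c) then show ?case by (simp add: poly_smult central_smult)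
next
  case (mul a b) then show ?case by (simp add: poly_mul central_mul)
qed

lemma alpha_out: "L \<notin> lab ` supp f \<Longrightarrow> alpha f L = 0"
  unfolding alpha_def lin_def phi_def by (intro sum.neutral) auto

lemma main_cset: "\<forall>f\<in>nc_poly. central_mod I f \<longleftrightarrow> (\<exists>h\<in>nc_subalg GS. nc_diff f h \<in> I)"
proof
  fix f assume f: "f \<in> nc_poly"
  show "central_mod I f \<longleftrightarrow> (\<exists>h\<in>nc_subalg GS. nc_diff f h \<in> I)"
  proof
    assume c: "central_mod I f"
    let ?S = "lab ` supp f \<union> swp ` lab ` supp f"
    have fin0: "finite (supp f)" using f by (simp add: poly_iff)
    then have fin: "finite ?S" by simp
    have Sswp: "swp L \<in> ?S" if "L \<in> ?S" for L using that by (auto simp: image_iff)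
    let ?h = "nsum (\<lambda>L. nc_smult (alpha f L / 2) (G L)) ?S"
    have hs: "?h \<in> nc_subalg GS" using fin by (intro subalg_nsum nc_subalg.smult G_sub)
    let ?N = "nsum (\<lambda>L. nc_smult (alpha f L) (nc_mono (rep L))) ?S"
    have E1: "eqv f (nsum (\<lambda>L. nc_smult (alpha f L) (nc_mono (rep L))) (lab ` supp f))" by (rule expand[OF f])
    have E2: "nsum (\<lambda>L. nc_smult (alpha f L) (nc_mono (rep L))) (lab ` supp f) = ?N"
      unfolding nsum_def
      by (rule ext, rule sum.mono_neutral_left) (use fin alpha_out in \<open>auto simp: nc_smult_def\<close>)
    have E3: "eqv ?h (nsum (\<lambda>L. nc_smult (alpha f L / 2) (pr (rep L) (rep (swp L)))) ?S)"
    proof (rule eqv_nsum[OF fin])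
      fix L assume "L \<in> ?S"
      show "eqv (nc_smult (alpha f L / 2) (G L)) (nc_smult (alpha f L / 2) (pr (rep L) (rep (swp L))))"
      proof (cases "alpha f L = 0")
        case True
        have "nc_smult (alpha f L / 2) (G L) = nc_smult (alpha f L / 2) (pr (rep L) (rep (swp L)))"
          using True by (simp add: fun_eq_iff nc_smult_def)
        then show ?thesis by (simp add: eqv_refl)
      next
        case False
        then show ?thesis using CL[OF f c False] by (intro eqv_smult G_eqv) auto
      qed
    qed
    have E4: "nsum (\<lambda>L. nc_smult (alpha f L / 2) (pr (rep L) (rep (swp L)))) ?S = ?N"
    proof (rule ext)
      fix v
      have "(\<Sum>L\<in>?S. alpha f L / 2 * nc_mono (rep (swp L)) v) = (\<Sum>L\<in>?S. alpha f (swp L) / 2 * nc_mono (rep (swp L)) v)"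
        using alpha_swp[OF f c] by simp
      also have "\<dots> = (\<Sum>L\<in>?S. alpha f L / 2 * nc_mono (rep L) v)"
        by (rule sum.reindex_bij_witness[of _ swp swp]) (auto simp: Sswp)
      finally have sw: "(\<Sum>L\<in>?S. alpha f L / 2 * nc_mono (rep (swp L)) v) = (\<Sum>L\<in>?S. alpha f L / 2 * nc_mono (rep L) v)" .
      have "nsum (\<lambda>L. nc_smult (alpha f L / 2) (pr (rep L) (rep (swp L)))) ?S v =
        (\<Sum>L\<in>?S. alpha f L / 2 * nc_mono (rep L) v) + (\<Sum>L\<in>?S. alpha f L / 2 * nc_mono (rep (swp L)) v)"
        by (simp add: nsum_def nc_smult_def pr_def nc_add_def distrib_left sum.distrib)
      also have "\<dots> = (\<Sum>L\<in>?S. alpha f L / 2 * nc_mono (rep L) v + alpha f L / 2 * nc_mono (rep L) v)"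
        unfolding sw by (rule sum.distrib[symmetric])
      also have "\<dots> = (\<Sum>L\<in>?S. alpha f L * nc_mono (rep L) v)"
      proof -
        have h2: "a / 2 * r + a / 2 * r = a * r" for a r :: complex by (simp add: field_simps)
        show ?thesis by (simp only: h2)
      qed
      also have "\<dots> = ?N v" by (simp add: nsum_def nc_smult_def)
      finally show "nsum (\<lambda>L. nc_smult (alpha f L / 2) (pr (rep L) (rep (swp L)))) ?S v = ?N v" .
    qed
    have F1: "eqv f ?N" using E1 unfolding E2 .
    have F2: "eqv ?h ?N" using E3 unfolding E4 .
    have "eqv f ?h" by (rule eqv_trans[OF F1 eqv_sym[OF F2]])
    then show "\<exists>h\<in>nc_subalg GS. nc_diff f h \<in> I" using hs by (auto simp: eqv_def)
  next
    assume "\<exists>h\<in>nc_subalg GS. nc_diff f h \<in> I"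
    then obtain h where h: "h \<in> nc_subalg GS" and d: "nc_diff f h \<in> I" by blast
    have hp: "h \<in> nc_poly" and hc: "central_mod I h" using subalg_central[OF h] by auto
    show "central_mod I f"
      unfolding central_mod_def
    proof
      fix b assume b: "b \<in> nc_poly"
      have "nc_diff (nc_mul h b) (nc_mul b h) \<in> I" using hc b by (simp add: central_mod_def)
      moreover have "nc_diff (nc_mul (nc_diff f h) b) (nc_mul b (nc_diff f h)) \<in> I"
        by (rule I_diff[OF I_mul_right[OF b d] I_mul_left[OF b d]])
      moreover have "nc_diff (nc_mul f b) (nc_mul b f) =
          nc_add (nc_diff (nc_mul h b) (nc_mul b h)) (nc_diff (nc_mul (nc_diff f h) b) (nc_mul b (nc_diff f h)))"
        by (simp only: mul_diff_left mul_diff_right) (simp add: fun_eq_iff nc_add_def nc_diff_def)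
      ultimately show "nc_diff (nc_mul f b) (nc_mul b f) \<in> I" by (simp add: I_add)
    qed
  qed
qed

end

theorem mainTheorem12:
  fixes \<omega> t :: complex and n :: nat
  assumes "\<omega> ^ 3 = 1" and "\<omega> \<noteq> 1"
    and "t \<noteq> 0"
    and "n > 0" and "(- t) ^ n = 1" and "\<forall>k. 0 < k \<and> k < n \<longrightarrow> (- t) ^ k \<noteq> 1"
  shows "\<forall>f\<in>nc_poly. central_mod (I_M \<omega> t) f \<longleftrightarrow>
     (\<exists>h\<in>nc_subalg {nc_pow (nc_add x y) (2*n), nc_pow (nc_add x z) (2*n),
                     nc_pow (nc_add y z) (2*n)}. nc_diff f h \<in> I_M \<omega> t)"
proof -
  interpret cset \<omega> t n using assms by unfold_locales auto
  show ?thesis using main_cset by (simp add: GS_def)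
qed


end
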